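(* Let $N_q\ge 1$ and let $(U,|\vec{0}\rangle)$ be a stabilizer ansatz on $N_q$ qubits (as defined in the context). Then the number of real parameters of the ansatz is $N_p=2(2^{N_q}-1)$, which is the minimal number of real parameters needed to reach every $N_q$-qubit state, and the ansatz spans the entire Hilbert space: for every unit vector $|\phi\rangle\in\mathbb{C}^{2^{N_q}}$ there exist parameters $\vec{\theta}\in\mathbb{R}^{N_p}$ and a phase $\varphi\in\mathbb{R}$ with $U(\vec{\theta})|\vec{0}\rangle=e^{i\varphi}|\phi\rangle$.
   Context: Qubits are labelled $1,\dots,N_q$; states are unit vectors in $\mathbb{C}^{2^{N_q}}$ identified up to a global phase. Pauli operators are tensor products of $I,X,Y,Z$. An $[m,m]$ stabilizer group on qubits $1,\dots,m$ is an abelian group of $2^m$ Hermitian Pauli operators (with signs $\pm1$) on these qubits, generated by $m$ independent commuting Hermitian Pauli operators, not containing $-I$; its common eigenvectors form an orthonormal basis of the $m$-qubit space (for $m=0$ it is $\{I\}$). A stabilizer ansatz on $N_q$ qubits is specified by choosing, for each $n=1,\dots,N_q$: (1) an $[n-1,n-1]$ stabilizer group $\mathcal{S}^{(n)}$ acting on qubits $1,\dots,n-1$; (2) a single-qubit state $|s_n\rangle$ of qubit $n$; (3) two single-qubit Pauli operators $R^{(n)}_0,R^{(n)}_1$ acting on qubit $n$ with $\langle s_n|R^{(n)}_j|s_n\rangle=0$ for $j=0,1$ and $\mathrm{Trace}[R^{(n)}_0R^{(n)}_1]=0$. The starting state is $|\vec{0}\rangle=\otimes_{n=1}^{N_q}|s_n\rangle$,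 and the parametrized unitary is $U(\vec{\theta})=U^{(N_q)}\cdots U^{(2)}U^{(1)}$ (so $U^{(1)}$ acts first) with $U^{(n)}=\Big(\prod_{S\in\mathcal{S}^{(n)}}e^{i\theta^n_{S,1}R^{(n)}_1S}\Big)\Big(\prod_{S\in\mathcal{S}^{(n)}}e^{i\theta^n_{S,0}R^{(n)}_0S}\Big)$, where $R^{(n)}_jS$ denotes $R^{(n)}_j$ on qubit $n$ tensored with $S$ on qubits $1,\dots,n-1$ (identity elsewhere); there is one independent real parameter $\theta^n_{S,j}$ for each $n$, each $S\in\mathcal{S}^{(n)}$ and each $j\in\{0,1\}$. *)

theory Defs
  imports "HOL-Analysis.Analysis"
begin

text \<open>A d x d complex matrix is a function nat => nat => complex whose entries
  outside {0..<d} x {0..<d} are zero; a vector in C^d is a function nat => complex,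
  only the entries below d being relevant.\<close>

type_synonym cmat = "nat \<Rightarrow> nat \<Rightarrow> complex"
type_synonym cvec = "nat \<Rightarrow> complex"

definition idm :: "nat \<Rightarrow> cmat" where
  "idm d = (\<lambda>i j. if i = j \<and> i < d then 1 else 0)"

definition mmul :: "nat \<Rightarrow> cmat \<Rightarrow> cmat \<Rightarrow> cmat" where
  "mmul d A B = (\<lambda>i j. if i < d \<and> j < d then (\<Sum>k<d. A i k * B k j) else 0)"

definition mvec :: "nat \<Rightarrow> cmat \<Rightarrow> cvec \<Rightarrow> cvec" where
  "mvec d A v = (\<lambda>i. if i < d then (\<Sum>k<d. A i k * v k) else 0)"

fun mpow :: "nat \<Rightarrow> cmat \<Rightarrow> nat \<Rightarrow> cmat" where
  "mpow d A 0 = idm d"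
| "mpow d A (Suc k) = mmul d A (mpow d A k)"

fun mprodl :: "nat \<Rightarrow> cmat list \<Rightarrow> cmat" where
  "mprodl d [] = idm d"
| "mprodl d (A # As) = mmul d A (mprodl d As)"

definition mexp :: "nat \<Rightarrow> cmat \<Rightarrow> cmat" where
  "mexp d A = (\<lambda>i j. \<Sum>k. mpow d A k i j / of_nat (fact k))"

datatype pauli = PI | PX | PY | PZ

definition sigma :: "pauli \<Rightarrow> cmat" where
  "sigma P a b = (if a < 2 \<and> b < 2 then
      (case P of
         PI \<Rightarrow> (if a = b then 1 else 0)
       | PX \<Rightarrow> (if a \<noteq> b then 1 else 0)
       | PY \<Rightarrow> (if a = 0 \<and> b = 1 then - \<i> else if a = 1 \<and> b = 0 then \<i> else 0)
       | PZ \<Rightarrow> (if a = b then (if a = 0 then 1 else -1) else 0))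
    else 0)"

text \<open>Tensor-product convention: qubit q (q = 1,2,...) corresponds to bit q-1 of the
  computational basis index.\<close>
definition qbit :: "nat \<Rightarrow> nat \<Rightarrow> nat" where
  "qbit q i = (i div 2 ^ (q - 1)) mod 2"

definition pauli_mat :: "nat \<Rightarrow> (nat \<Rightarrow> pauli) \<Rightarrow> cmat" where
  "pauli_mat m p = (\<lambda>i j. if i < 2 ^ m \<and> j < 2 ^ m then
      (\<Prod>q\<in>{1..m}. sigma (p q) (qbit q i) (qbit q j)) else 0)"

definition herm_pauli :: "nat \<Rightarrow> cmat \<Rightarrow> bool" where
  "herm_pauli m M \<longleftrightarrow> (\<exists>s p. (s = 1 \<or> s = -1) \<and> M = (\<lambda>i j. s * pauli_mat m p i j))"

definition gen_prod :: "nat \<Rightarrow> cmat list \<Rightarrow> nat set \<Rightarrow> cmat" where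
  "gen_prod m gs A = mprodl (2 ^ m) (map (\<lambda>i. gs ! i) (filter (\<lambda>i. i \<in> A) [0..<length gs]))"

text \<open>Since the generators commute
  and square to the identity, the generated group is the set of subset-products of the
  generators, and independence means that distinct subsets give distinct products.\<close>
definition stabilizer_group :: "nat \<Rightarrow> cmat set \<Rightarrow> bool" where
  "stabilizer_group m S \<longleftrightarrow>
     (\<exists>gs. length gs = m
        \<and> (\<forall>g\<in>set gs. herm_pauli m g)
        \<and> (\<forall>g\<in>set gs. \<forall>h\<in>set gs. mmul (2 ^ m) g h = mmul (2 ^ m) h g)
        \<and> inj_on (gen_prod m gs) (Pow {..<m})
        \<and> S = gen_prod m gs ` Pow {..<m})
     \<and> (\<forall>M\<in>S. herm_pauli m M)
     \<and> (\<forall>A\<in>S. \<forall>B\<in>S. mmul (2 ^ m) A B = mmul (2 ^ m) B A)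
     \<and> (\<lambda>i j. - idm (2 ^ m) i j) \<notin> S"

text \<open>R S as an operator on N qubits: the single-qubit matrix R on qubit n, the
  matrix S on qubits 1..n-1, identity on qubits n+1..N.\<close>
definition embed_RS :: "nat \<Rightarrow> nat \<Rightarrow> cmat \<Rightarrow> cmat \<Rightarrow> cmat" where
  "embed_RS N n R S = (\<lambda>r c.
     if r < 2 ^ N \<and> c < 2 ^ N \<and> r div 2 ^ n = c div 2 ^ n then
       R (qbit n r) (qbit n c) * S (r mod 2 ^ (n - 1)) (c mod 2 ^ (n - 1))
     else 0)"

definition rot :: "nat \<Rightarrow> real \<Rightarrow> cmat \<Rightarrow> cmat" where
  "rot N t P = mexp (2 ^ N) (\<lambda>i j. \<i> * of_real t * P i j)"

text \<open>The layer U^(n).  Sl n enumerates the stabilizer group S^(n); the parameter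
  theta n k j belongs to the element Sl n ! k and to j in {0,1}; r n j is the Pauli
  letter of R^(n)_j.\<close>
definition layer :: "nat \<Rightarrow> (nat \<Rightarrow> cmat list) \<Rightarrow> (nat \<Rightarrow> nat \<Rightarrow> pauli)
                      \<Rightarrow> (nat \<Rightarrow> nat \<Rightarrow> nat \<Rightarrow> real) \<Rightarrow> nat \<Rightarrow> cmat" where
  "layer N Sl r \<theta> n =
     mmul (2 ^ N)
       (mprodl (2 ^ N) (map (\<lambda>k. rot N (\<theta> n k 1) (embed_RS N n (sigma (r n 1)) (Sl n ! k)))
                            [0..<length (Sl n)]))
       (mprodl (2 ^ N) (map (\<lambda>k. rot N (\<theta> n k 0) (embed_RS N n (sigma (r n 0)) (Sl n ! k)))
                            [0..<length (Sl n)]))"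

definition ansatz_U :: "nat \<Rightarrow> (nat \<Rightarrow> cmat list) \<Rightarrow> (nat \<Rightarrow> nat \<Rightarrow> pauli)
                         \<Rightarrow> (nat \<Rightarrow> nat \<Rightarrow> nat \<Rightarrow> real) \<Rightarrow> cmat" where
  "ansatz_U N Sl r \<theta> = mprodl (2 ^ N) (map (layer N Sl r \<theta>) (rev [1..<N + 1]))"

definition start_state :: "nat \<Rightarrow> (nat \<Rightarrow> cvec) \<Rightarrow> cvec" where
  "start_state N s = (\<lambda>i. if i < 2 ^ N then (\<Prod>q\<in>{1..N}. s q (qbit q i)) else 0)"

definition param_index :: "nat \<Rightarrow> (nat \<Rightarrow> cmat list) \<Rightarrow> (nat \<times> nat \<times> nat) set" where
  "param_index N Sl = {(n, k, j). n \<in> {1..N} \<and> k < length (Sl n) \<and> j \<in> {0, 1}}"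

definition stabilizer_ansatz :: "nat \<Rightarrow> (nat \<Rightarrow> cmat list) \<Rightarrow> (nat \<Rightarrow> cvec)
                                  \<Rightarrow> (nat \<Rightarrow> nat \<Rightarrow> pauli) \<Rightarrow> bool" where
  "stabilizer_ansatz N Sl s r \<longleftrightarrow>
     (\<forall>n\<in>{1..N}.
        distinct (Sl n) \<and> stabilizer_group (n - 1) (set (Sl n))
      \<and> (cmod (s n 0))\<^sup>2 + (cmod (s n 1))\<^sup>2 = 1
      \<and> (\<forall>j\<in>{0,1::nat}. (\<Sum>a<2. \<Sum>b<2. cnj (s n a) * sigma (r n j) a b * s n b) = 0)
      \<and> (\<Sum>a<2. \<Sum>b<2. sigma (r n 0) a b * sigma (r n 1) b a) = 0)"

definition unit_vec :: "nat \<Rightarrow> cvec \<Rightarrow> bool" where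
  "unit_vec d v \<longleftrightarrow> (\<Sum>i<d. (cmod (v i))\<^sup>2) = 1"

end

theory Submission
  imports Defs
begin

definition restr :: "nat \<Rightarrow> cvec \<Rightarrow> cvec" where
  "restr d v = (\<lambda>i. if i < d then v i else 0)"

lemma mvec_restr: "mvec d A (restr d v) = mvec d A v"
  by (auto simp: mvec_def restr_def intro!: ext sum.cong)

lemma mvec_mmul: "mvec d (mmul d A B) v = mvec d A (mvec d B v)"
proof
  fix i show "mvec d (mmul d A B) v i = mvec d A (mvec d B v) i"
    unfolding mvec_def mmul_def
    by (auto simp: sum_distrib_left sum_distrib_right mult.assoc intro: sum.swap)
qed

lemma mmul_assoc: "mmul d (mmul d A B) C = mmul d A (mmul d B C)"
proof (intro ext)
  fix i j show "mmul d (mmul d A B) C i j = mmul d A (mmul d B C) i j"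
    unfolding mmul_def
    by (auto simp: sum_distrib_left sum_distrib_right mult.assoc intro: sum.swap)
qed

lemma mvec_idm: "mvec d (idm d) v = restr d v"
proof
  fix i
  have "(\<Sum>k<d. (if i = k then 1 else 0) * v k) = (\<Sum>k<d. if k = i then v i else 0)"
    by (rule sum.cong) auto
  then show "mvec d (idm d) v i = restr d v i"
    by (simp add: mvec_def idm_def restr_def)
qed

lemma mvec_mprodl_Cons: "mvec d (mprodl d (A # As)) v = mvec d A (mvec d (mprodl d As) v)"
  by (simp add: mvec_mmul)

lemma mvec_mprodl_Nil: "mvec d (mprodl d []) v = restr d v"
  by (simp add: mvec_idm)

lemma restr_mvec[simp]: "restr d (mvec d A v) = mvec d A v"
  by (auto simp: restr_def mvec_def)

definition resm :: "nat \<Rightarrow> cmat \<Rightarrow> cmat" where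
  "resm d P = (\<lambda>i j. if i < d \<and> j < d then P i j else 0)"

lemma mpow_invol:
  assumes "mmul d P P = idm d"
  shows "mpow d (\<lambda>i j. c * P i j) k
       = (\<lambda>i j. c ^ k * (if even k then idm d i j else resm d P i j))"
proof (induction k)
  case 0 then show ?case by simp
next
  case (Suc k)
  show ?case
  proof (cases "even k")
    case True
    have "mmul d (\<lambda>i j. c * P i j) (\<lambda>i j. c ^ k * idm d i j)
        = (\<lambda>i j. c ^ Suc k * resm d P i j)"
      by (auto simp: mmul_def idm_def resm_def if_distrib sum.delta cong: if_cong intro!: ext)
    then show ?thesis using Suc True by simp
  next
    case False
    have "mmul d (\<lambda>i j. c * P i j) (\<lambda>i j. c ^ k * resm d P i j)
        = (\<lambda>i j. c ^ Suc k * mmul d P P i j)"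
      by (auto simp: mmul_def resm_def sum_distrib_left mult_ac intro!: ext sum.cong)
    then show ?thesis using Suc False assms by simp
  qed
qed

lemma exp_even_odd_sums:
  fixes t :: real and a b :: complex
  shows "(\<lambda>k. (\<i> * of_real t) ^ k / of_nat (fact k) * (if even k then a else b))
           sums (of_real (cos t) * a + \<i> * of_real (sin t) * b)"
proof -
  define z where "z = \<i> * complex_of_real t"
  have e1: "(\<lambda>k. z ^ k / of_nat (fact k)) sums exp z"
    using exp_converges[of z] by (simp add: scaleR_conv_of_real divide_inverse mult.commute)
  have e2: "(\<lambda>k. (- z) ^ k / of_nat (fact k)) sums exp (- z)"
    using exp_converges[of "-z"] by (simp add: scaleR_conv_of_real divide_inverse mult.commute)
  have s: "(\<lambda>k. (a / 2) * (z ^ k / of_nat (fact k)) + (a / 2) * ((- z) ^ k / of_nat (fact k))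
              + ((b / 2) * (z ^ k / of_nat (fact k)) - (b / 2) * ((- z) ^ k / of_nat (fact k))))
          sums ((a / 2) * exp z + (a / 2) * exp (- z) + ((b / 2) * exp z - (b / 2) * exp (- z)))"
    by (intro sums_add sums_diff sums_mult e1 e2)
  have t1: "(a / 2) * (z ^ k / of_nat (fact k)) + (a / 2) * ((- z) ^ k / of_nat (fact k))
              + ((b / 2) * (z ^ k / of_nat (fact k)) - (b / 2) * ((- z) ^ k / of_nat (fact k)))
         = z ^ k / of_nat (fact k) * (if even k then a else b)" for k
  proof (cases "even k")
    case True
    then have "(- z) ^ k = z ^ k" by (simp add: power_minus_even)
    moreover have "a / 2 * X + a / 2 * X + (b / 2 * X - b / 2 * X) = X * a" for X :: complex
      by (simp add: field_simps)
    ultimately show ?thesis using True by simp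
  next
    case False
    then have "(- z) ^ k = - (z ^ k)" by (simp add: power_minus_odd)
    moreover have "a / 2 * X + a / 2 * (- X) + (b / 2 * X - b / 2 * (- X)) = X * b" for X :: complex
      by (simp add: field_simps)
    ultimately show ?thesis using False by simp
  qed
  have cz: "complex_of_real (cos t) = (exp z + exp (- z)) / 2"
    by (simp add: z_def cos_exp_eq flip: cos_of_real)
  have sz: "\<i> * complex_of_real (sin t) = (exp z - exp (- z)) / 2"
    by (simp add: z_def sin_exp_eq field_simps flip: sin_of_real)
  have "(a / 2) * exp z + (a / 2) * exp (- z) + ((b / 2) * exp z - (b / 2) * exp (- z))
        = of_real (cos t) * a + \<i> * of_real (sin t) * b"
    by (simp add: cz sz field_simps)
  with s t1 show ?thesis by (simp add: z_def)
qed

lemma mexp_invol: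
  assumes "mmul d P P = idm d"
  shows "mexp d (\<lambda>i j. \<i> * of_real t * P i j)
       = (\<lambda>i j. of_real (cos t) * idm d i j + \<i> * of_real (sin t) * resm d P i j)"
proof (intro ext)
  fix i j
  have "mexp d (\<lambda>i j. \<i> * of_real t * P i j) i j
     = (\<Sum>k. (\<i> * of_real t) ^ k / of_nat (fact k) * (if even k then idm d i j else resm d P i j))"
    unfolding mexp_def mpow_invol[OF assms] by (simp add: power_mult_distrib)
  also have "\<dots> = of_real (cos t) * idm d i j + \<i> * of_real (sin t) * resm d P i j"
    by (rule sums_unique[symmetric]) (rule exp_even_odd_sums)
  finally show "mexp d (\<lambda>i j. \<i> * of_real t * P i j) i j = of_real (cos t) * idm d i j + \<i> * of_real (sin t) * resm d P i j" .
qed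

lemma mvec_resm: "mvec d (resm d P) v = mvec d P v"
  by (auto simp: mvec_def resm_def intro!: ext)

lemma mvec_lin: "mvec d (\<lambda>i j. a * A i j + b * B i j) v = (\<lambda>i. a * mvec d A v i + b * mvec d B v i)"
  by (auto simp: mvec_def sum.distrib sum_distrib_left algebra_simps intro!: ext)

lemma mvec_rot:
  assumes "mmul (2 ^ N) P P = idm (2 ^ N)"
  shows "mvec (2 ^ N) (rot N t P) v
       = (\<lambda>i. of_real (cos t) * restr (2 ^ N) v i + \<i> * of_real (sin t) * mvec (2 ^ N) P v i)"
  unfolding rot_def mexp_invol[OF assms] mvec_lin mvec_idm mvec_resm ..


definition prodv :: "nat \<Rightarrow> nat \<Rightarrow> cvec \<Rightarrow> cvec \<Rightarrow> cvec" where
  "prodv N m x y = (\<lambda>i. if i < 2 ^ N then x (i mod 2 ^ m) * y (i div 2 ^ m) else 0)"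

definition R1 :: "cmat \<Rightarrow> cvec \<Rightarrow> cvec" where
  "R1 R y = (\<lambda>h. \<Sum>b<2. R (h mod 2) b * y (h div 2 * 2 + b))"

lemma div_pow_Suc: "(x::nat) div 2 ^ Suc m = x div 2 ^ m div 2"
  by (simp only: power_Suc2 div_mult2_eq)

lemma lh_mod[simp]: "(l::nat) < 2 ^ m \<Longrightarrow> (l + h * 2 ^ m) mod 2 ^ m = l"
  by simp

lemma lh_div[simp]: "(l::nat) < 2 ^ m \<Longrightarrow> (l + h * 2 ^ m) div 2 ^ m = h"
  by simp

lemma lh_less: "(l::nat) < 2 ^ m \<Longrightarrow> h < 2 ^ (N - m) \<Longrightarrow> m \<le> N \<Longrightarrow> l + h * 2 ^ m < 2 ^ N"
proof -
  assume a: "l < 2 ^ m" "h < 2 ^ (N - m)" "m \<le> N"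
  have "l + h * 2 ^ m < 2 ^ m + h * 2 ^ m" using a by simp
  also have "\<dots> = (h + 1) * 2 ^ m" by simp
  also have "\<dots> \<le> 2 ^ (N - m) * 2 ^ m" using a by (intro mult_right_mono) auto
  also have "\<dots> = 2 ^ N" using a by (simp flip: power_add)
  finally show ?thesis .
qed

lemma embed_prodv:
  assumes "Suc m \<le> N"
  shows "mvec (2 ^ N) (embed_RS N (Suc m) R S) (prodv N m x y)
       = prodv N m (mvec (2 ^ m) S x) (R1 R y)"
proof (rule ext)
  fix i
  show "mvec (2 ^ N) (embed_RS N (Suc m) R S) (prodv N m x y) i
       = prodv N m (mvec (2 ^ m) S x) (R1 R y) i"
  proof (cases "i < 2 ^ N")
    case False then show ?thesis by (simp add: mvec_def prodv_def)
  next
    case True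
    define H where "H = i div 2 ^ m div 2"
    define b0 where "b0 = i div 2 ^ m mod 2"
    have e1: "(2::nat) ^ N = 2 ^ (N - m) * 2 ^ m" using assms by (simp flip: power_add)
    have e2: "(2::nat) ^ (N - m) = 2 ^ (N - Suc m) * 2" using assms
      by (metis Suc_diff_Suc Suc_le_lessD power_Suc2)
    have Hlt: "H < 2 ^ (N - Suc m)"
    proof -
      have "i div 2 ^ m < 2 ^ (N - m)" using True e1
        by (simp add: less_mult_imp_div_less)
      then show ?thesis unfolding H_def e2 by (simp add: less_mult_imp_div_less)
    qed
    have "mvec (2 ^ N) (embed_RS N (Suc m) R S) (prodv N m x y) i
        = (\<Sum>c<2 ^ N. embed_RS N (Suc m) R S i c * prodv N m x y c)"
      using True by (simp add: mvec_def)
    also have "\<dots> = (\<Sum>h<2 ^ (N - m). \<Sum>l<2 ^ m.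
                 embed_RS N (Suc m) R S i (l + h * 2 ^ m) * prodv N m x y (l + h * 2 ^ m))"
      unfolding e1 sum_mult_product ..
    also have "\<dots> = (\<Sum>h<2 ^ (N - m). \<Sum>l<2 ^ m.
                 (if h div 2 = H then R b0 (h mod 2) * y h else 0) * (S (i mod 2 ^ m) l * x l))"
    proof (intro sum.cong refl)
      fix h l :: nat assume h: "h \<in> {..<2 ^ (N - m)}" and l: "l \<in> {..<2 ^ m}"
      have lt: "l + h * 2 ^ m < 2 ^ N" using h l assms by (intro lh_less) auto
      have q1: "qbit (Suc m) (l + h * 2 ^ m) = h mod 2" using l by (simp add: qbit_def)
      have q2: "qbit (Suc m) i = b0" by (simp add: qbit_def b0_def)
      have d1: "(l + h * 2 ^ m) div 2 ^ Suc m = h div 2" unfolding div_pow_Suc using l by simp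
      have d2: "i div 2 ^ Suc m = H" unfolding div_pow_Suc H_def ..
      show "embed_RS N (Suc m) R S i (l + h * 2 ^ m) * prodv N m x y (l + h * 2 ^ m)
          = (if h div 2 = H then R b0 (h mod 2) * y h else 0) * (S (i mod 2 ^ m) l * x l)"
        using lt l True unfolding embed_RS_def prodv_def d1 d2 q1 q2
        by (simp add: mult_ac)
    qed
    also have "\<dots> = (\<Sum>h<2 ^ (N - m). (if h div 2 = H then R b0 (h mod 2) * y h else 0)
                     * mvec (2 ^ m) S x (i mod 2 ^ m))"
      by (simp add: mvec_def sum_distrib_left)
    also have "\<dots> = (\<Sum>h'<2 ^ (N - Suc m). \<Sum>b<2. (if (b + h' * 2) div 2 = H
                        then R b0 ((b + h' * 2) mod 2) * y (b + h' * 2) else 0)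
                     * mvec (2 ^ m) S x (i mod 2 ^ m))"
      unfolding e2 sum_mult_product ..
    also have "\<dots> = (\<Sum>h'<2 ^ (N - Suc m). if h' = H then
                      (\<Sum>b<2. R b0 b * y (b + H * 2)) * mvec (2 ^ m) S x (i mod 2 ^ m) else 0)"
      by (intro sum.cong refl) (auto simp: sum_distrib_right)
    also have "\<dots> = (\<Sum>b<2. R b0 b * y (b + H * 2)) * mvec (2 ^ m) S x (i mod 2 ^ m)"
      using Hlt by simp
    also have "\<dots> = prodv N m (mvec (2 ^ m) S x) (R1 R y) i"
      using True by (simp add: prodv_def R1_def b0_def H_def add.commute)
    finally show ?thesis .
  qed
qed


lemma sum2: "(\<Sum>k<2::nat. f k) = f 0 + f 1"
  by (simp add: numeral_2_eq_2)

lemma qbit_lt2[simp]: "qbit q i < 2"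
  by (simp add: qbit_def)

lemma qbit_low:
  assumes "j < 2 ^ m" "1 \<le> q" "q \<le> m"
  shows "qbit q (j + i * 2 ^ m) = qbit q j"
proof -
  have qq: "q - 1 + (m - q + 1) = m" using assms by simp
  have e: "(2::nat) ^ m = 2 ^ (q - 1) * 2 ^ (m - q + 1)" by (metis qq power_add)
  have jj: "j + i * 2 ^ m = j + (i * 2 ^ (m - q + 1)) * 2 ^ (q - 1)" unfolding e by (simp add: mult_ac)
  have "(j + i * 2 ^ m) div 2 ^ (q - 1) = j div 2 ^ (q - 1) + i * 2 ^ (m - q + 1)"
    unfolding jj by simp
  moreover have "(a + i * 2 ^ (m - q + 1)) mod 2 = a mod 2" for a :: nat
    by (simp add: mult.left_commute[of i 2])
  ultimately show ?thesis by (simp add: qbit_def)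
qed

lemma qbit_high:
  assumes "j < 2 ^ m" "i < 2"
  shows "qbit (Suc m) (j + i * 2 ^ m) = i"
  using assms by (simp add: qbit_def)

lemma bit_sum_prod:
  fixes F :: "nat \<Rightarrow> nat \<Rightarrow> 'a::comm_semiring_1"
  shows "(\<Sum>k<2 ^ m. \<Prod>q\<in>{1..m}. F q (qbit q k)) = (\<Prod>q\<in>{1..m}. \<Sum>b<2. F q b)"
proof (induction m)
  case 0 then show ?case by simp
next
  case (Suc m)
  have "(\<Sum>k<2 ^ Suc m. \<Prod>q\<in>{1..Suc m}. F q (qbit q k))
      = (\<Sum>i<2. \<Sum>j<2 ^ m. \<Prod>q\<in>{1..Suc m}. F q (qbit q (j + i * 2 ^ m)))"
    by (simp add: sum_mult_product mult.commute)
  also have "\<dots> = (\<Sum>i<2. \<Sum>j<2 ^ m. F (Suc m) i * (\<Prod>q\<in>{1..m}. F q (qbit q j)))"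
  proof (intro sum.cong refl)
 fix i j :: nat assume i: "i \<in> {..<2::nat}" and j: "j \<in> {..<2 ^ m}"
    have "{1..Suc m} = insert (Suc m) {1..m}" by auto
    then have "(\<Prod>q\<in>{1..Suc m}. F q (qbit q (j + i * 2 ^ m)))
        = F (Suc m) (qbit (Suc m) (j + i * 2 ^ m)) * (\<Prod>q\<in>{1..m}. F q (qbit q (j + i * 2 ^ m)))"
      by simp
    also have "\<dots> = F (Suc m) i * (\<Prod>q\<in>{1..m}. F q (qbit q j))"
      using i j by (simp add: qbit_high qbit_low)
    finally show "(\<Prod>q\<in>{1..Suc m}. F q (qbit q (j + i * 2 ^ m))) = F (Suc m) i * (\<Prod>q\<in>{1..m}. F q (qbit q j))" .
  qed
  also have "\<dots> = (\<Sum>i<2. F (Suc m) i) * (\<Prod>q\<in>{1..m}. \<Sum>b<2. F q b)"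
    by (simp only: Suc.IH[symmetric] sum_product)
  also have "\<dots> = (\<Prod>q\<in>{1..Suc m}. \<Sum>b<2. F q b)"
  proof -
    have "{1..Suc m} = insert (Suc m) {1..m}" by auto
    then show ?thesis by simp
  qed
  finally show ?case .
qed

lemma bits_eq:
  assumes "i < 2 ^ m" "j < 2 ^ m" "\<forall>q\<in>{1..m}. qbit q i = qbit q j"
  shows "i = j"
proof (rule ccontr)
  assume ne: "i \<noteq> j"
  define F where "F = (\<lambda>q b. if b = qbit q j then (1::nat) else 0)"
  have "(\<Sum>k<2 ^ m. \<Prod>q\<in>{1..m}. F q (qbit q k)) = (\<Prod>q\<in>{1..m}. \<Sum>b<2. F q b)"
    by (rule bit_sum_prod)
  also have "\<dots> = 1"
  proof (intro prod.neutral ballI)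
    fix q have "qbit q j < 2" by simp
    then show "(\<Sum>b<2. F q b) = 1" unfolding F_def by (auto simp: sum2 less_2_cases_iff)
  qed
  finally have s1: "(\<Sum>k<2 ^ m. \<Prod>q\<in>{1..m}. F q (qbit q k)) = 1" .
  have pi: "(\<Prod>q\<in>{1..m}. F q (qbit q i)) = 1" "(\<Prod>q\<in>{1..m}. F q (qbit q j)) = 1"
    using assms(3) by (auto simp: F_def intro!: prod.neutral)
  have "(\<Sum>k\<in>{i, j}. \<Prod>q\<in>{1..m}. F q (qbit q k)) \<le> (\<Sum>k<2 ^ m. \<Prod>q\<in>{1..m}. F q (qbit q k))"
    using assms(1,2) by (intro sum_mono2) auto
  then show False using s1 pi ne by simp
qed

lemma bits_eq_iff:
  assumes "i < 2 ^ m" "j < 2 ^ m"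
  shows "(\<forall>q\<in>{1..m}. qbit q i = qbit q j) \<longleftrightarrow> i = j"
  using bits_eq[OF assms] by auto

lemma prod_of_bool_bits:
  assumes "i < 2 ^ m" "j < 2 ^ m"
  shows "(\<Prod>q\<in>{1..m}. (if qbit q i = qbit q j then 1 else 0 :: complex)) = (if i = j then 1 else 0)"
proof (cases "i = j")
  case True then show ?thesis by simp
next
  case False
  then obtain q where "q \<in> {1..m}" "qbit q i \<noteq> qbit q j" using bits_eq[OF assms] by blast
  then have "\<exists>a\<in>{1..m}. (if qbit a i = qbit a j then 1 else 0::complex) = 0" by auto
  then show ?thesis using False by (simp only: prod_zero finite_atLeastAtMost) simp
qed

lemma sigma_sq_entry:
  assumes "a < 2" "b < 2"
  shows "(\<Sum>k<2. sigma p a k * sigma p k b) = (if a = b then 1 else 0)"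
  using assms by (cases p) (auto simp: sum2 sigma_def less_2_cases_iff)

lemma sigma_herm: "cnj (sigma p b a) = sigma p a b"
  by (cases p) (auto simp: sigma_def)

lemma sigma_trace: "(\<Sum>a<2. sigma p a a) = (if p = PI then 2 else 0)"
  by (cases p) (auto simp: sum2 sigma_def)

lemma pauli_sq: "mmul (2 ^ m) (pauli_mat m p) (pauli_mat m p) = idm (2 ^ m)"
proof (intro ext)
  fix i j
  show "mmul (2 ^ m) (pauli_mat m p) (pauli_mat m p) i j = idm (2 ^ m) i j"
  proof (cases "i < 2 ^ m \<and> j < 2 ^ m")
    case False then show ?thesis by (auto simp: mmul_def idm_def)
  next
    case True
    have "mmul (2 ^ m) (pauli_mat m p) (pauli_mat m p) i j
        = (\<Sum>k<2 ^ m. \<Prod>q\<in>{1..m}. sigma (p q) (qbit q i) (qbit q k) * sigma (p q) (qbit q k) (qbit q j))"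
      using True by (simp add: mmul_def pauli_mat_def prod.distrib)
    also have "\<dots> = (\<Prod>q\<in>{1..m}. \<Sum>b<2. sigma (p q) (qbit q i) b * sigma (p q) b (qbit q j))"
      by (rule bit_sum_prod)
    also have "\<dots> = (\<Prod>q\<in>{1..m}. (if qbit q i = qbit q j then 1 else 0))"
      by (intro prod.cong refl sigma_sq_entry) auto
    also have "\<dots> = (if i = j then 1 else 0)"
      using True by (intro prod_of_bool_bits) auto
    also have "\<dots> = idm (2 ^ m) i j"
      using True by (simp add: idm_def)
    finally show ?thesis .
  qed
qed

lemma pauli_herm: "cnj (pauli_mat m p j i) = pauli_mat m p i j"
  by (auto simp: pauli_mat_def sigma_herm)

lemma pauli_trace:
  "(\<Sum>i<2 ^ m. pauli_mat m p i i) = (\<Prod>q\<in>{1..m}. if p q = PI then 2 else 0)"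
proof -
  have "(\<Sum>i<2 ^ m. pauli_mat m p i i) = (\<Sum>i<2 ^ m. \<Prod>q\<in>{1..m}. sigma (p q) (qbit q i) (qbit q i))"
    by (simp add: pauli_mat_def)
  also have "\<dots> = (\<Prod>q\<in>{1..m}. \<Sum>b<2. sigma (p q) b b)"
    by (rule bit_sum_prod)
  finally show ?thesis by (simp add: sigma_trace)
qed

lemma pauli_allI:
  assumes "\<forall>q\<in>{1..m}. p q = PI"
  shows "pauli_mat m p = idm (2 ^ m)"
proof (intro ext)
  fix i j
  show "pauli_mat m p i j = idm (2 ^ m) i j"
  proof (cases "i < 2 ^ m \<and> j < 2 ^ m")
    case False then show ?thesis by (auto simp: pauli_mat_def idm_def)
  next
    case True
    have "pauli_mat m p i j = (\<Prod>q\<in>{1..m}. (if qbit q i = qbit q j then 1 else 0))"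
      using True assms by (auto simp: pauli_mat_def sigma_def intro!: prod.cong)
    also have "\<dots> = (if i = j then 1 else 0)"
      using True by (intro prod_of_bool_bits) auto
    finally show ?thesis using True by (simp add: idm_def)
  qed
qed

lemma herm_pauli_sq:
  assumes "herm_pauli m M"
  shows "mmul (2 ^ m) M M = idm (2 ^ m)"
proof -
  obtain s p where sp: "s = 1 \<or> s = -1" "M = (\<lambda>i j. s * pauli_mat m p i j)"
    using assms unfolding herm_pauli_def by blast
  have "mmul (2 ^ m) M M = (\<lambda>i j. (s * s) * mmul (2 ^ m) (pauli_mat m p) (pauli_mat m p) i j)"
    unfolding sp(2) by (auto simp: mmul_def sum_distrib_left mult_ac intro!: ext)
  also have "\<dots> = idm (2 ^ m)" using sp(1) by (auto simp: pauli_sq)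
  finally show ?thesis .
qed

lemma herm_pauli_herm:
  assumes "herm_pauli m M"
  shows "cnj (M j i) = M i j"
proof -
  obtain s p where sp: "s = 1 \<or> s = -1" "M = (\<lambda>i j. s * pauli_mat m p i j)"
    using assms unfolding herm_pauli_def by blast
  then show ?thesis by (auto simp: pauli_herm)
qed

lemma herm_pauli_trace:
  assumes "herm_pauli m M"
  shows "(\<Sum>i<2 ^ m. M i i) = 0 \<or> M = idm (2 ^ m) \<or> M = (\<lambda>i j. - idm (2 ^ m) i j)"
proof -
  obtain s p where sp: "s = 1 \<or> s = -1" "M = (\<lambda>i j. s * pauli_mat m p i j)"
    using assms unfolding herm_pauli_def by blast
  show ?thesis
  proof (cases "\<forall>q\<in>{1..m}. p q = PI")
    case True
    then show ?thesis using sp pauli_allI[OF True] by auto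
  next
    case False
    then obtain q where q: "q \<in> {1..m}" "p q \<noteq> PI" by auto
    have "(\<Sum>i<2 ^ m. M i i) = s * (\<Sum>i<2 ^ m. pauli_mat m p i i)"
      by (simp add: sp(2) sum_distrib_left)
    also have "\<dots> = 0" unfolding pauli_trace using q
      by (simp, intro disjI2 prod_zero) (auto intro!: bexI[of _ q])
    finally show ?thesis by simp
  qed
qed


definition wfm :: "nat \<Rightarrow> cmat \<Rightarrow> bool" where
  "wfm d A \<longleftrightarrow> (\<forall>i j. \<not> (i < d \<and> j < d) \<longrightarrow> A i j = 0)"

lemma wfm_mmul[simp]: "wfm d (mmul d A B)" by (simp add: wfm_def mmul_def)
lemma wfm_idm[simp]: "wfm d (idm d)" by (simp add: wfm_def idm_def)
lemma wfm_mprodl[simp]: "wfm d (mprodl d L)" by (cases L) auto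
lemma resm_wfm: "wfm d A \<Longrightarrow> resm d A = A"
  by (auto simp: wfm_def resm_def intro!: ext)
lemma wfm_sum: "(\<And>k. k \<in> K \<Longrightarrow> wfm d (B k)) \<Longrightarrow> wfm d (\<lambda>a b. \<Sum>k\<in>K. f k * B k a b)"
  by (auto simp: wfm_def intro!: sum.neutral)
lemma wfm_scale: "wfm d B \<Longrightarrow> wfm d (\<lambda>a b. c * B a b)"
  by (auto simp: wfm_def)

lemma mmul_idm_left: "mmul d (idm d) A = resm d A"
proof (intro ext)
  fix i j
  have "(\<Sum>k<d. (if i = k then 1 else 0) * A k j) = (\<Sum>k<d. if k = i then A i j else 0)"
    by (rule sum.cong) auto
  then show "mmul d (idm d) A i j = resm d A i j" by (simp add: mmul_def idm_def resm_def)
qed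

lemma mmul_idm_right: "mmul d A (idm d) = resm d A"
proof (intro ext)
  fix i j
  have "(\<Sum>k<d. A i k * (if k = j then 1 else 0)) = (\<Sum>k<d. if k = j then A i j else 0)"
    by (rule sum.cong) auto
  then show "mmul d A (idm d) i j = resm d A i j" by (simp add: mmul_def idm_def resm_def)
qed

lemma mmul_sum_right:
  "mmul d A (\<lambda>a b. \<Sum>k\<in>K. f k * B k a b) = (\<lambda>a b. \<Sum>k\<in>K. f k * mmul d A (B k) a b)"
  by (auto simp: mmul_def sum_distrib_left mult_ac intro!: ext sum.swap[THEN trans])

lemma mmul_sum_left:
  "mmul d (\<lambda>a b. \<Sum>k\<in>K. f k * B k a b) A = (\<lambda>a b. \<Sum>k\<in>K. f k * mmul d (B k) A a b)"
  by (auto simp: mmul_def sum_distrib_left sum_distrib_right mult_ac intro!: ext sum.swap[THEN trans])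

lemma mmul_add_left:
  "mmul d (\<lambda>a b. A a b + c * B a b) M = (\<lambda>a b. mmul d A M a b + c * mmul d B M a b)"
  by (auto simp: mmul_def sum.distrib sum_distrib_left algebra_simps intro!: ext)

lemma mmul_add_right:
  "mmul d M (\<lambda>a b. A a b + c * B a b) = (\<lambda>a b. mmul d M A a b + c * mmul d M B a b)"
  by (auto simp: mmul_def sum.distrib sum_distrib_left algebra_simps intro!: ext)

lemma mmul_scale_left: "mmul d (\<lambda>a b. c * A a b) M = (\<lambda>a b. c * mmul d A M a b)"
  by (auto simp: mmul_def sum_distrib_left mult_ac intro!: ext)

lemma mmul_scale_right: "mmul d M (\<lambda>a b. c * A a b) = (\<lambda>a b. c * mmul d M A a b)"
  by (auto simp: mmul_def sum_distrib_left mult_ac intro!: ext)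

lemma mprodl_expand:
  assumes "distinct xs" "\<And>i. wfm d (G i)"
  shows "mprodl d (map (\<lambda>i a b. idm d a b + c i * G i a b) xs)
       = (\<lambda>a b. \<Sum>A\<in>Pow (set xs). (\<Prod>i\<in>A. c i) * mprodl d (map G (filter (\<lambda>i. i \<in> A) xs)) a b)"
  using assms(1)
proof (induction xs)
  case Nil then show ?case by simp
next
  case (Cons x xs)
  define M where "M = (\<lambda>a b. \<Sum>A\<in>Pow (set xs). (\<Prod>i\<in>A. c i) * mprodl d (map G (filter (\<lambda>i. i \<in> A) xs)) a b)"
  have xn: "x \<notin> set xs" and dx: "distinct xs" using Cons.prems by auto
  have wM: "wfm d M" unfolding M_def by (rule wfm_sum) simp
  have "mprodl d (map (\<lambda>i a b. idm d a b + c i * G i a b) (x # xs))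
      = mmul d (\<lambda>a b. idm d a b + c x * G x a b) M"
    using Cons.IH[OF dx] by (simp add: M_def)
  also have "\<dots> = (\<lambda>a b. M a b + c x * mmul d (G x) M a b)"
    unfolding mmul_add_left mmul_idm_left resm_wfm[OF wM] ..
  also have "\<dots> = (\<lambda>a b. \<Sum>A\<in>Pow (set (x # xs)). (\<Prod>i\<in>A. c i) * mprodl d (map G (filter (\<lambda>i. i \<in> A) (x # xs))) a b)"
  proof (intro ext)
    fix a b
    have P: "Pow (set (x # xs)) = Pow (set xs) \<union> insert x ` Pow (set xs)"
      by (simp add: Pow_insert)
    have disj: "Pow (set xs) \<inter> insert x ` Pow (set xs) = {}" using xn by auto
    have inj: "inj_on (insert x) (Pow (set xs))" using xn
      by (auto simp: inj_on_def)
    have f1: "filter (\<lambda>i. i \<in> A) (x # xs) = filter (\<lambda>i. i \<in> A) xs" if "A \<in> Pow (set xs)" for A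
      using that xn by auto
    have f2: "filter (\<lambda>i. i \<in> insert x A) (x # xs) = x # filter (\<lambda>i. i \<in> A) xs" if "A \<in> Pow (set xs)" for A
    proof -
      have "filter (\<lambda>i. i \<in> insert x A) xs = filter (\<lambda>i. i \<in> A) xs"
        using xn by (intro filter_cong) auto
      then show ?thesis by simp
    qed
    have p2: "(\<Prod>i\<in>insert x A. c i) = c x * (\<Prod>i\<in>A. c i)" if "A \<in> Pow (set xs)" for A
      using that xn by (subst prod.insert) (auto dest: finite_subset)
    have "(\<Sum>A\<in>Pow (set (x # xs)). (\<Prod>i\<in>A. c i) * mprodl d (map G (filter (\<lambda>i. i \<in> A) (x # xs))) a b)
        = (\<Sum>A\<in>Pow (set xs). (\<Prod>i\<in>A. c i) * mprodl d (map G (filter (\<lambda>i. i \<in> A) (x # xs))) a b)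
        + (\<Sum>A\<in>insert x ` Pow (set xs). (\<Prod>i\<in>A. c i) * mprodl d (map G (filter (\<lambda>i. i \<in> A) (x # xs))) a b)"
      unfolding P by (rule sum.union_disjoint) (use disj in auto)
    also have "\<dots> = M a b + (\<Sum>A\<in>Pow (set xs). c x * ((\<Prod>i\<in>A. c i) * mmul d (G x) (mprodl d (map G (filter (\<lambda>i. i \<in> A) xs))) a b))"
    proof -
      have s1: "(\<Sum>A\<in>Pow (set xs). (\<Prod>i\<in>A. c i) * mprodl d (map G (filter (\<lambda>i. i \<in> A) (x # xs))) a b) = M a b"
        unfolding M_def
      proof (rule sum.cong[OF refl])
        fix A assume A: "A \<in> Pow (set xs)"
        show "(\<Prod>i\<in>A. c i) * mprodl d (map G (filter (\<lambda>i. i \<in> A) (x # xs))) a b = (\<Prod>i\<in>A. c i) * mprodl d (map G (filter (\<lambda>i. i \<in> A) xs)) a b"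
          unfolding f1[OF A] ..
      qed
      have s2: "(\<Sum>A\<in>insert x ` Pow (set xs). (\<Prod>i\<in>A. c i) * mprodl d (map G (filter (\<lambda>i. i \<in> A) (x # xs))) a b)
          = (\<Sum>A\<in>Pow (set xs). (\<Prod>i\<in>insert x A. c i) * mprodl d (map G (filter (\<lambda>i. i \<in> insert x A) (x # xs))) a b)"
        by (subst sum.reindex[OF inj]) (simp only: comp_def)
      also have "\<dots> = (\<Sum>A\<in>Pow (set xs). c x * ((\<Prod>i\<in>A. c i) * mmul d (G x) (mprodl d (map G (filter (\<lambda>i. i \<in> A) xs))) a b))"
      proof (rule sum.cong[OF refl])
        fix A assume A: "A \<in> Pow (set xs)"
        show "(\<Prod>i\<in>insert x A. c i) * mprodl d (map G (filter (\<lambda>i. i \<in> insert x A) (x # xs))) a b = c x * ((\<Prod>i\<in>A. c i) * mmul d (G x) (mprodl d (map G (filter (\<lambda>i. i \<in> A) xs))) a b)"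
          unfolding f2[OF A] p2[OF A] by simp
      qed
      finally show ?thesis using s1 by simp
    qed
    also have "\<dots> = M a b + c x * mmul d (G x) M a b"
      unfolding M_def mmul_sum_right by (simp add: sum_distrib_left)
    finally show "M a b + c x * mmul d (G x) M a b = (\<Sum>A\<in>Pow (set (x # xs)). (\<Prod>i\<in>A. c i) * mprodl d (map G (filter (\<lambda>i. i \<in> A) (x # xs))) a b)" by simp
  qed
  finally show ?case .
qed


definition eps :: "nat set \<Rightarrow> nat \<Rightarrow> complex" where
  "eps E i = (if i \<in> E then -1 else 1)"

definition chi :: "nat set \<Rightarrow> nat set \<Rightarrow> complex" where
  "chi E A = (\<Prod>i\<in>A. eps E i)"

lemma eps_sq[simp]: "eps E i * eps E i = 1" by (simp add: eps_def)

lemma chi_restrict: "finite A \<Longrightarrow> chi E A = (-1) ^ card (A \<inter> E)"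
  unfolding chi_def eps_def using prod.inter_restrict[of A "\<lambda>_. -1::complex" E] by simp

lemma chi_sym: "finite A \<Longrightarrow> finite E \<Longrightarrow> chi E A = chi A E"
  by (simp add: chi_restrict Int_commute)

lemma sum_pow_prod:
  fixes f :: "nat \<Rightarrow> complex"
  assumes "finite M"
  shows "(\<Sum>A\<in>Pow M. \<Prod>i\<in>A. f i) = (\<Prod>i\<in>M. f i + 1)"
  using prod_add[OF assms, of f "\<lambda>_. 1"] by simp

lemma char_orth:
  assumes "finite M" "E \<subseteq> M" "E' \<subseteq> M"
  shows "(\<Sum>A\<in>Pow M. chi E A * chi E' A) = (if E = E' then 2 ^ card M else 0)"
proof -
  have "(\<Sum>A\<in>Pow M. chi E A * chi E' A) = (\<Sum>A\<in>Pow M. \<Prod>i\<in>A. eps E i * eps E' i)"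
    unfolding chi_def by (simp add: prod.distrib)
  also have "\<dots> = (\<Prod>i\<in>M. eps E i * eps E' i + 1)"
    by (rule sum_pow_prod[OF assms(1)])
  also have "\<dots> = (if E = E' then 2 ^ card M else 0)"
  proof (cases "E = E'")
    case True then show ?thesis by simp
  next
    case False
    then obtain i where "i \<in> M" "(i \<in> E) \<noteq> (i \<in> E')" using assms by blast
    then have "\<exists>i\<in>M. eps E i * eps E' i + 1 = 0" by (auto simp: eps_def)
    then show ?thesis using False assms(1) by simp
  qed
  finally show ?thesis .
qed

lemma char_sum_E:
  assumes "finite M" "A \<subseteq> M"
  shows "(\<Sum>E\<in>Pow M. chi E A) = (if A = {} then 2 ^ card M else 0)"
proof -
  have fA: "finite A" using assms finite_subset by blast
  have "(\<Sum>E\<in>Pow M. chi E A) = (\<Sum>E\<in>Pow M. chi A E)"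
    using assms fA by (intro sum.cong refl chi_sym) (auto dest: finite_subset)
  also have "\<dots> = (\<Prod>i\<in>M. eps A i + 1)" unfolding chi_def by (rule sum_pow_prod[OF assms(1)])
  also have "\<dots> = (if A = {} then 2 ^ card M else 0)"
  proof (cases "A = {}")
    case True then show ?thesis by (simp add: eps_def)
  next
    case False
    then obtain i where "i \<in> A" by blast
    then have "\<exists>i\<in>M. eps A i + 1 = 0" using assms by (auto simp: eps_def)
    then show ?thesis using False assms(1) by simp
  qed
  finally show ?thesis .
qed

lemma chi_real: "cnj (chi E A) = chi E A"
  unfolding chi_def eps_def by (induction A rule: infinite_finite_induct) auto

lemma chi_pm: "chi E A = 1 \<or> chi E A = -1"
  unfolding chi_def eps_def
  by (induction A rule: infinite_finite_induct) auto

definition Qm :: "nat \<Rightarrow> cmat list \<Rightarrow> nat set \<Rightarrow> cmat" where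
  "Qm m gs E = mprodl (2 ^ m) (map (\<lambda>i a b. idm (2 ^ m) a b + eps E i * (gs ! i) a b) [0..<m])"

lemma wfm_pauli: "wfm (2 ^ m) (pauli_mat m p)"
  by (simp add: wfm_def pauli_mat_def)

lemma wfm_herm_pauli: "herm_pauli m M \<Longrightarrow> wfm (2 ^ m) M"
  unfolding herm_pauli_def by (auto simp: wfm_def pauli_mat_def)

lemma gen_prod_empty: "gen_prod m gs {} = idm (2 ^ m)"
  by (simp add: gen_prod_def)

locale stab =
  fixes m :: nat and gs :: "cmat list"
  assumes len: "length gs = m"
    and gherm: "\<forall>g\<in>set gs. herm_pauli m g"
    and gcomm: "\<forall>g\<in>set gs. \<forall>h\<in>set gs. mmul (2 ^ m) g h = mmul (2 ^ m) h g"
    and ginj: "inj_on (gen_prod m gs) (Pow {..<m})"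
    and Sherm: "\<forall>A\<in>Pow {..<m}. herm_pauli m (gen_prod m gs A)"
    and notneg: "(\<lambda>i j. - idm (2 ^ m) i j) \<notin> gen_prod m gs ` Pow {..<m}"
begin

lemma g_herm: "i < m \<Longrightarrow> herm_pauli m (gs ! i)"
  using gherm len by auto

lemma g_sq: "i < m \<Longrightarrow> mmul (2 ^ m) (gs ! i) (gs ! i) = idm (2 ^ m)"
  by (rule herm_pauli_sq[OF g_herm])

lemma g_wf: "i < m \<Longrightarrow> wfm (2 ^ m) (gs ! i)"
  by (rule wfm_herm_pauli[OF g_herm])

lemma g_comm: "i < m \<Longrightarrow> j < m \<Longrightarrow> mmul (2 ^ m) (gs ! i) (gs ! j) = mmul (2 ^ m) (gs ! j) (gs ! i)"
  using gcomm len by auto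

lemma Q_expand: "Qm m gs E = (\<lambda>a b. \<Sum>A\<in>Pow {..<m}. chi E A * gen_prod m gs A a b)"
proof -
  define G where "G = (\<lambda>i. if i < m then gs ! i else idm (2 ^ m))"
  have wG: "wfm (2 ^ m) (G i)" for i by (simp add: G_def g_wf)
  have "Qm m gs E = mprodl (2 ^ m) (map (\<lambda>i a b. idm (2 ^ m) a b + eps E i * G i a b) [0..<m])"
    unfolding Qm_def G_def by (intro arg_cong[where f = "mprodl _"] map_cong) auto
  also have "\<dots> = (\<lambda>a b. \<Sum>A\<in>Pow (set [0..<m]). (\<Prod>i\<in>A. eps E i) * mprodl (2 ^ m) (map G (filter (\<lambda>i. i \<in> A) [0..<m])) a b)"
    by (rule mprodl_expand) (simp_all add: wG)
  also have "\<dots> = (\<lambda>a b. \<Sum>A\<in>Pow {..<m}. chi E A * gen_prod m gs A a b)"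
  proof -
    have "map G (filter (\<lambda>i. i \<in> A) [0..<m]) = map ((!) gs) (filter (\<lambda>i. i \<in> A) [0..<length gs])" for A
      using len by (auto simp: G_def)
    then show ?thesis by (simp add: gen_prod_def chi_def atLeast0LessThan)
  qed
  finally show ?thesis .
qed

lemma g_F_comm:
  assumes "i < m" "j < m"
  shows "mmul (2 ^ m) (gs ! j) (\<lambda>a b. idm (2 ^ m) a b + c * (gs ! i) a b)
       = mmul (2 ^ m) (\<lambda>a b. idm (2 ^ m) a b + c * (gs ! i) a b) (gs ! j)"
  unfolding mmul_add_left mmul_add_right mmul_idm_left mmul_idm_right g_comm[OF assms] ..

lemma g_F_same:
  assumes "j < m" "c = 1 \<or> c = -1"
  shows "mmul (2 ^ m) (gs ! j) (\<lambda>a b. idm (2 ^ m) a b + c * (gs ! j) a b)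
       = (\<lambda>a b. c * (idm (2 ^ m) a b + c * (gs ! j) a b))"
  unfolding mmul_add_right mmul_idm_right g_sq[OF assms(1)] resm_wfm[OF g_wf[OF assms(1)]]
  using assms(2) by (auto simp: algebra_simps intro!: ext)

lemma g_prodl:
  assumes "distinct xs" "j \<in> set xs" "set xs \<subseteq> {..<m}"
  shows "mmul (2 ^ m) (gs ! j) (mprodl (2 ^ m) (map (\<lambda>i a b. idm (2 ^ m) a b + eps E i * (gs ! i) a b) xs))
       = (\<lambda>a b. eps E j * mprodl (2 ^ m) (map (\<lambda>i a b. idm (2 ^ m) a b + eps E i * (gs ! i) a b) xs) a b)"
  using assms
proof (induction xs)
  case Nil then show ?case by simp
next
  case (Cons x xs)
  let ?F = "\<lambda>i a b. idm (2 ^ m) a b + eps E i * (gs ! i) a b"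
  let ?M = "mprodl (2 ^ m) (map ?F xs)"
  have jm: "j < m" "x < m" using Cons.prems by auto
  show ?case
  proof (cases "x = j")
    case True
    have "mmul (2 ^ m) (gs ! j) (mmul (2 ^ m) (?F x) ?M) = mmul (2 ^ m) (mmul (2 ^ m) (gs ! j) (?F j)) ?M"
      using True by (simp add: mmul_assoc)
    also have "\<dots> = mmul (2 ^ m) (\<lambda>a b. eps E j * ?F j a b) ?M"
      by (subst g_F_same[OF jm(1)]) (auto simp: eps_def)
    finally show ?thesis using True by (simp add: mmul_scale_left)
  next
    case False
    then have IH: "mmul (2 ^ m) (gs ! j) ?M = (\<lambda>a b. eps E j * ?M a b)"
      using Cons by auto
    have "mmul (2 ^ m) (gs ! j) (mmul (2 ^ m) (?F x) ?M) = mmul (2 ^ m) (mmul (2 ^ m) (gs ! j) (?F x)) ?M"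
      by (simp add: mmul_assoc)
    also have "\<dots> = mmul (2 ^ m) (?F x) (mmul (2 ^ m) (gs ! j) ?M)"
      by (simp only: g_F_comm[OF jm(2,1)] mmul_assoc)
    also have "\<dots> = (\<lambda>a b. eps E j * mmul (2 ^ m) (?F x) ?M a b)"
      by (simp only: IH mmul_scale_right)
    finally show ?thesis by simp
  qed
qed

lemma g_Q: "j < m \<Longrightarrow> mmul (2 ^ m) (gs ! j) (Qm m gs E) = (\<lambda>a b. eps E j * Qm m gs E a b)"
  unfolding Qm_def by (rule g_prodl) auto

lemma S_Q_list:
  assumes "distinct L" "set L \<subseteq> {..<m}"
  shows "mmul (2 ^ m) (mprodl (2 ^ m) (map ((!) gs) L)) (Qm m gs E)
       = (\<lambda>a b. (\<Prod>i\<in>set L. eps E i) * Qm m gs E a b)"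
  using assms
proof (induction L)
  case Nil
  have "wfm (2 ^ m) (Qm m gs E)" by (simp add: Qm_def)
  then show ?case by (simp add: mmul_idm_left resm_wfm)
next
  case (Cons x L)
  have "mmul (2 ^ m) (mprodl (2 ^ m) (map ((!) gs) (x # L))) (Qm m gs E)
      = mmul (2 ^ m) (gs ! x) (mmul (2 ^ m) (mprodl (2 ^ m) (map ((!) gs) L)) (Qm m gs E))"
    by (simp add: mmul_assoc)
  also have "\<dots> = (\<lambda>a b. (\<Prod>i\<in>set L. eps E i) * (eps E x * Qm m gs E a b))"
    using Cons by (simp add: mmul_scale_right g_Q)
  finally show ?case using Cons.prems by (simp add: mult_ac)
qed

lemma S_Q:
  assumes "A \<subseteq> {..<m}"
  shows "mmul (2 ^ m) (gen_prod m gs A) (Qm m gs E) = (\<lambda>a b. chi E A * Qm m gs E a b)"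
proof -
  have "set (filter (\<lambda>i. i \<in> A) [0..<length gs]) = A" using assms len by auto
  then show ?thesis unfolding gen_prod_def chi_def
    by (subst S_Q_list) (use len in auto)
qed

lemma Q_Q:
  assumes "E \<subseteq> {..<m}" "E' \<subseteq> {..<m}"
  shows "mmul (2 ^ m) (Qm m gs E) (Qm m gs E') = (\<lambda>a b. (if E = E' then 2 ^ m else 0) * Qm m gs E' a b)"
proof -
  have "mmul (2 ^ m) (Qm m gs E) (Qm m gs E') = (\<lambda>a b. \<Sum>A\<in>Pow {..<m}. chi E A * mmul (2 ^ m) (gen_prod m gs A) (Qm m gs E') a b)"
    by (subst Q_expand[of E]) (rule mmul_sum_left)
  also have "\<dots> = (\<lambda>a b. \<Sum>A\<in>Pow {..<m}. chi E A * chi E' A * Qm m gs E' a b)"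
    by (intro ext sum.cong refl) (auto simp: S_Q)
  also have "\<dots> = (\<lambda>a b. (\<Sum>A\<in>Pow {..<m}. chi E A * chi E' A) * Qm m gs E' a b)"
    by (simp add: sum_distrib_right)
  also have "\<dots> = (\<lambda>a b. (if E = E' then 2 ^ m else 0) * Qm m gs E' a b)"
    using char_orth[of "{..<m}" E E'] assms by simp
  finally show ?thesis .
qed

lemma trace_S:
  assumes "A \<subseteq> {..<m}" "A \<noteq> {}"
  shows "(\<Sum>i<2 ^ m. gen_prod m gs A i i) = 0"
proof -
  have h: "herm_pauli m (gen_prod m gs A)" using Sherm assms by auto
  have "gen_prod m gs A \<noteq> idm (2 ^ m)"
  proof
    assume "gen_prod m gs A = idm (2 ^ m)"
    then have "gen_prod m gs A = gen_prod m gs {}" by (simp add: gen_prod_empty)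
    then show False using ginj assms by (auto dest: inj_onD)
  qed
  moreover have "gen_prod m gs A \<noteq> (\<lambda>i j. - idm (2 ^ m) i j)"
  proof
    assume "gen_prod m gs A = (\<lambda>i j. - idm (2 ^ m) i j)"
    then have "(\<lambda>i j. - idm (2 ^ m) i j) \<in> gen_prod m gs ` Pow {..<m}"
      using assms(1) by (metis Pow_iff image_eqI)
    then show False using notneg by blast
  qed
  ultimately show ?thesis using herm_pauli_trace[OF h] by auto
qed

lemma Q_trace:
  assumes "E \<subseteq> {..<m}"
  shows "(\<Sum>i<2 ^ m. Qm m gs E i i) = 2 ^ m"
proof -
  have "(\<Sum>i<2 ^ m. Qm m gs E i i) = (\<Sum>A\<in>Pow {..<m}. chi E A * (\<Sum>i<2 ^ m. gen_prod m gs A i i))"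
    by (simp add: Q_expand sum_distrib_left sum.swap[of _ "{..<2 ^ m}"])
  also have "\<dots> = (\<Sum>A\<in>{{}}. chi E A * (\<Sum>i<2 ^ m. gen_prod m gs A i i))"
    by (rule sum.mono_neutral_right) (auto simp: trace_S)
  also have "\<dots> = 2 ^ m" by (simp add: chi_def gen_prod_empty idm_def)
  finally show ?thesis .
qed

lemma Q_sum: "(\<Sum>E\<in>Pow {..<m}. Qm m gs E a b) = 2 ^ m * idm (2 ^ m) a b"
proof -
  have "(\<Sum>E\<in>Pow {..<m}. Qm m gs E a b) = (\<Sum>A\<in>Pow {..<m}. (\<Sum>E\<in>Pow {..<m}. chi E A) * gen_prod m gs A a b)"
  proof -
    have "(\<Sum>E\<in>Pow {..<m}. Qm m gs E a b) = (\<Sum>E\<in>Pow {..<m}. \<Sum>A\<in>Pow {..<m}. chi E A * gen_prod m gs A a b)"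
      by (simp add: Q_expand)
    also have "\<dots> = (\<Sum>A\<in>Pow {..<m}. \<Sum>E\<in>Pow {..<m}. chi E A * gen_prod m gs A a b)"
      by (rule sum.swap)
    finally show ?thesis by (simp add: sum_distrib_right)
  qed
  also have "\<dots> = (\<Sum>A\<in>{{}}. (\<Sum>E\<in>Pow {..<m}. chi E A) * gen_prod m gs A a b)"
    by (rule sum.mono_neutral_right) (auto simp: char_sum_E)
  also have "\<dots> = 2 ^ m * idm (2 ^ m) a b" by (simp add: char_sum_E gen_prod_empty)
  finally show ?thesis .
qed

lemma Q_herm: "cnj (Qm m gs E b a) = Qm m gs E a b"
proof -
  have "cnj (chi E A * gen_prod m gs A b a) = chi E A * gen_prod m gs A a b" if "A \<in> Pow {..<m}" for A
  proof -
    have "herm_pauli m (gen_prod m gs A)" using that Sherm by blast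
    then show ?thesis by (simp add: chi_real herm_pauli_herm)
  qed
  then show ?thesis unfolding Q_expand cnj_sum by (intro sum.cong refl) auto
qed

lemma Q_wf: "wfm (2 ^ m) (Qm m gs E)" by (simp add: Qm_def)

end


lemma cnj_mult_self: "z * cnj z = complex_of_real ((cmod z)\<^sup>2)"
  by (metis complex_norm_square of_real_power)

lemma sum_cmod_zero:
  assumes "finite I" "(\<Sum>i\<in>I. complex_of_real ((cmod (f i))\<^sup>2)) = 0" "i \<in> I"
  shows "f i = 0"
proof -
  have "(\<Sum>i\<in>I. (cmod (f i))\<^sup>2) = 0" using assms(2)
    by (metis of_real_eq_0_iff of_real_sum)
  then have "\<forall>i\<in>I. (cmod (f i))\<^sup>2 = 0" using assms(1) by (subst (asm) sum_nonneg_eq_0_iff) auto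
  then show ?thesis using assms(3) by simp
qed

lemma rank_one:
  fixes P :: cmat and d :: nat
  assumes herm: "\<And>i j. cnj (P j i) = P i j"
    and idem: "\<And>i j. i < d \<Longrightarrow> j < d \<Longrightarrow> (\<Sum>k<d. P i k * P k j) = P i j"
    and tr: "(\<Sum>i<d. P i i) = 1"
  shows "\<exists>e. (\<Sum>i<d. (cmod (e i))\<^sup>2) = 1 \<and> (\<forall>i<d. \<forall>j<d. P i j = e i * cnj (e j))"
proof -
  have diag: "P j j = of_real (\<Sum>k<d. (cmod (P k j))\<^sup>2)" if "j < d" for j
  proof -
    have "P j j = (\<Sum>k<d. P k j * cnj (P k j))" using idem[OF that that] herm
      by (simp add: mult.commute)
    also have "\<dots> = of_real (\<Sum>k<d. (cmod (P k j))\<^sup>2)" by (simp add: cnj_mult_self)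
    finally show ?thesis .
  qed
  obtain j0 where j0: "j0 < d" "P j0 j0 \<noteq> 0"
  proof -
    have "\<exists>j<d. P j j \<noteq> 0"
    proof (rule ccontr)
      assume "\<not> (\<exists>j<d. P j j \<noteq> 0)"
      then have "(\<Sum>i<d. P i i) = 0" by simp
      then show False using tr by simp
    qed
    then show ?thesis using that by blast
  qed
  define p where "p = (\<Sum>k<d. (cmod (P k j0))\<^sup>2)"
  have Pp: "P j0 j0 = of_real p" using diag[OF j0(1)] p_def by simp
  have p0: "p > 0" using Pp j0(2) p_def by (metis of_real_0 order_less_le sum_nonneg zero_le_power2)
  define pc where "pc = complex_of_real p"
  have pc0: "pc \<noteq> 0" using p0 pc_def by simp
  define u where "u = (\<lambda>i. P i j0)"
  have N: "(\<Sum>i<d. u i * cnj (u i)) = pc"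
  proof -
    have "(\<Sum>i<d. u i * cnj (u i)) = (\<Sum>i<d. P j0 i * P i j0)"
      by (simp add: u_def herm mult.commute)
    also have "\<dots> = pc" using idem[OF j0(1) j0(1)] Pp pc_def by simp
    finally show ?thesis .
  qed
  have Pu: "(\<Sum>k<d. P i k * u k) = u i" if "i < d" for i
    using idem[OF that j0(1)] by (simp add: u_def)
  have uP: "(\<Sum>i<d. cnj (u i) * P i k) = cnj (u k)" if "k < d" for k
  proof -
    have "(\<Sum>i<d. cnj (u i) * P i k) = (\<Sum>i<d. P j0 i * P i k)" by (simp add: u_def herm)
    also have "\<dots> = P j0 k" by (rule idem[OF j0(1) that])
    finally show ?thesis by (simp add: u_def herm)
  qed
  define Q where "Q = (\<lambda>i k. P i k - u i * cnj (u k) / pc)"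
  have cpc: "cnj pc = pc" by (simp add: pc_def)
  have expand: "Q i k * cnj (Q i k) = P i k * P k i - cnj (u i) * (P i k * u k) / pc
        - u i * (cnj (u k) * P k i) / pc + (u i * cnj (u i)) * (u k * cnj (u k)) / (pc * pc)" for i k
    unfolding Q_def using pc0 herm[of k i] herm[of i k] by (simp add: cpc field_simps)
  have T1: "(\<Sum>i<d. \<Sum>k<d. P i k * P k i) = 1" using idem tr by simp
  have T2: "(\<Sum>i<d. \<Sum>k<d. cnj (u i) * (P i k * u k) / pc) = 1"
  proof -
    have "(\<Sum>i<d. \<Sum>k<d. cnj (u i) * (P i k * u k) / pc) = (\<Sum>i<d. cnj (u i) * (\<Sum>k<d. P i k * u k) / pc)"
      by (simp add: sum_distrib_left sum_divide_distrib)
    also have "\<dots> = (\<Sum>i<d. cnj (u i) * u i / pc)" by (rule sum.cong[OF refl]) (simp add: Pu)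
    also have "\<dots> = (\<Sum>i<d. u i * cnj (u i)) / pc" by (simp add: sum_divide_distrib mult.commute)
    finally show ?thesis using N pc0 by simp
  qed
  have T3: "(\<Sum>i<d. \<Sum>k<d. u i * (cnj (u k) * P k i) / pc) = 1"
  proof -
    have "(\<Sum>i<d. \<Sum>k<d. u i * (cnj (u k) * P k i) / pc) = (\<Sum>i<d. u i * (\<Sum>k<d. cnj (u k) * P k i) / pc)"
      by (simp add: sum_distrib_left sum_divide_distrib)
    also have "\<dots> = (\<Sum>i<d. u i * cnj (u i) / pc)" by (rule sum.cong[OF refl]) (simp add: uP)
    also have "\<dots> = (\<Sum>i<d. u i * cnj (u i)) / pc" by (simp add: sum_divide_distrib)
    finally show ?thesis using N pc0 by simp
  qed
  have T4: "(\<Sum>i<d. \<Sum>k<d. (u i * cnj (u i)) * (u k * cnj (u k)) / (pc * pc)) = 1"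
  proof -
    have "(\<Sum>i<d. \<Sum>k<d. (u i * cnj (u i)) * (u k * cnj (u k)) / (pc * pc))
        = (\<Sum>i<d. u i * cnj (u i)) * (\<Sum>k<d. u k * cnj (u k)) / (pc * pc)"
      by (simp add: sum_product sum_divide_distrib)
    then show ?thesis using N pc0 by simp
  qed
  have S0: "(\<Sum>i<d. \<Sum>k<d. Q i k * cnj (Q i k)) = 0"
    unfolding expand by (simp add: sum_subtractf sum.distrib T1 T2 T3 T4)
  have Qz: "Q i k = 0" if "i < d" "k < d" for i k
  proof -
    have "complex_of_real (\<Sum>i<d. \<Sum>k<d. (cmod (Q i k))\<^sup>2) = 0"
      using S0 by (simp add: cnj_mult_self)
    then have R: "(\<Sum>i<d. \<Sum>k<d. (cmod (Q i k))\<^sup>2) = 0" by (simp only: of_real_eq_0_iff)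
    have "\<forall>i\<in>{..<d}. (\<Sum>k<d. (cmod (Q i k))\<^sup>2) = 0"
      using R by (subst (asm) sum_nonneg_eq_0_iff) (auto intro: sum_nonneg)
    then have "(\<Sum>k<d. (cmod (Q i k))\<^sup>2) = 0" using that by blast
    then have "\<forall>k\<in>{..<d}. (cmod (Q i k))\<^sup>2 = 0"
      by (subst (asm) sum_nonneg_eq_0_iff) auto
    then show ?thesis using that by simp
  qed
  define s where "s = complex_of_real (sqrt p)"
  define e where "e = (\<lambda>i. u i / s)"
  have sq: "s * s = pc"
  proof -
    have "sqrt p * sqrt p = p" using p0 by simp
    then show ?thesis unfolding s_def pc_def of_real_mult[symmetric] by simp
  qed
  have cs: "cnj s = s" by (simp add: s_def)
  have ee: "e i * cnj (e j) = u i * cnj (u j) / pc" for i j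
    unfolding e_def by (simp add: cs flip: sq)
  have "P i j = e i * cnj (e j)" if "i < d" "j < d" for i j
    using Qz[OF that] by (simp add: Q_def ee)
  moreover have "(\<Sum>i<d. (cmod (e i))\<^sup>2) = 1"
  proof -
    have "complex_of_real (\<Sum>i<d. (cmod (e i))\<^sup>2) = (\<Sum>i<d. e i * cnj (e i))"
      by (simp add: cnj_mult_self)
    also have "\<dots> = (\<Sum>i<d. u i * cnj (u i)) / pc"
      unfolding ee by (simp add: sum_divide_distrib)
    also have "\<dots> = 1" using N pc0 by simp
    finally show ?thesis by (metis of_real_eq_1_iff)
  qed
  ultimately show ?thesis by blast
qed


lemma cmod_sq_cnj: "complex_of_real ((cmod z)\<^sup>2) = z * cnj z"
  by (metis complex_norm_square of_real_power)

lemma rot_solve: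
  fixes ws wt :: complex
  assumes unit: "(cmod ws)\<^sup>2 + (cmod wt)\<^sup>2 = 1"
  shows "\<exists>b g th. ws = cis th * (of_real (cos g) * of_real (cos b) - \<i> * of_real (sin g) * of_real (sin b))
                \<and> wt = cis th * (\<i> * of_real (sin g) * of_real (cos b) + of_real (cos g) * of_real (sin b))"
proof -
  define f where "f = (\<lambda>x. Re ((of_real (cos x) * ws + of_real (sin x) * wt)
                         * cnj (- of_real (sin x) * ws + of_real (cos x) * wt)))"
  define r where "r = Re (ws * cnj wt)"
  have f0: "f 0 = r" by (simp add: f_def r_def)
  have fpi: "f (pi / 2) = - r"
  proof -
    have "f (pi / 2) = Re (wt * cnj (- ws))" by (simp add: f_def)
    also have "\<dots> = - Re (cnj (ws * cnj wt))" by simp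
    finally show ?thesis by (simp add: r_def)
  qed
  have cont: "continuous_on {0..pi/2} f" unfolding f_def by (intro continuous_intros)
  obtain x where fx: "f x = 0"
  proof (cases "r \<ge> 0")
    case True
    then obtain x where "f x = 0" using IVT2'[of f "pi/2" 0 0] f0 fpi cont by auto
    then show ?thesis using that by blast
  next
    case False
    then obtain x where "f x = 0" using IVT'[of f 0 0 "pi/2"] f0 fpi cont by auto
    then show ?thesis using that by blast
  qed
  define c where "c = complex_of_real (cos x)"
  define s where "s = complex_of_real (sin x)"
  have cs1: "c * c + s * s = 1" unfolding c_def s_def
    by (metis of_real_1 of_real_add of_real_mult sin_cos_squared_add2 power2_eq_square add.commute)
  have cc: "cnj c = c" "cnj s = s" by (simp_all add: c_def s_def)
  define p where "p = c * ws + s * wt"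
  define q where "q = - s * ws + c * wt"
  have Rpq: "Re (p * cnj q) = 0" using fx by (simp add: f_def p_def q_def c_def s_def)
  have pq1: "(cmod p)\<^sup>2 + (cmod q)\<^sup>2 = 1"
  proof -
    have "complex_of_real ((cmod p)\<^sup>2 + (cmod q)\<^sup>2) = p * cnj p + q * cnj q"
      by (simp only: of_real_add cmod_sq_cnj)
    also have "\<dots> = (c * c + s * s) * (ws * cnj ws + wt * cnj wt)"
      unfolding p_def q_def by (simp add: cc algebra_simps)
    also have "\<dots> = complex_of_real ((cmod ws)\<^sup>2 + (cmod wt)\<^sup>2)"
      by (simp only: cs1 of_real_add cmod_sq_cnj mult_1)
    finally show ?thesis using unit by (metis of_real_eq_1_iff)
  qed
  have inv1: "ws = c * p - s * q" unfolding p_def q_def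
  proof -
    have "c * (c * ws + s * wt) - s * (- s * ws + c * wt) = (c * c + s * s) * ws"
      by (simp add: algebra_simps)
    then show "ws = c * (c * ws + s * wt) - s * (- s * ws + c * wt)" using cs1 by simp
  qed
  have inv2: "wt = s * p + c * q" unfolding p_def q_def
  proof -
    have "s * (c * ws + s * wt) + c * (- s * ws + c * wt) = (c * c + s * s) * wt"
      by (simp add: algebra_simps)
    then show "wt = s * (c * ws + s * wt) + c * (- s * ws + c * wt)" using cs1 by simp
  qed
  obtain th g where thg: "p = cis th * of_real (cos g)" "q = cis th * (\<i> * of_real (sin g))"
  proof (cases "p = 0")
    case True
    then have "(cmod q)\<^sup>2 = 1" using pq1 by simp
    then have q1: "cmod q = 1" by (simp add: power2_eq_1_iff) (use norm_ge_zero[of q] in linarith)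
    define th where "th = Arg (- \<i> * q)"
    have "- \<i> * q = cis th"
      using rcis_cmod_Arg[of "- \<i> * q"] q1 by (simp add: th_def rcis_def norm_mult)
    moreover have "q = \<i> * (- \<i> * q)" by simp
    ultimately have "q = cis th * \<i>" by (simp add: mult.commute)
    then show ?thesis using that[of th "pi/2"] True by simp
  next
    case False
    define th where "th = Arg p"
    have pth: "p = cis th * of_real (cmod p)"
      using rcis_cmod_Arg[of p] by (simp add: th_def rcis_def mult.commute)
    define y where "y = q * cis (- th)"
    have qy: "q = cis th * y" by (simp add: y_def cis_mult flip: cis_inverse)
    have "Re y = 0"
    proof -
      have "p * cnj q = cis th * of_real (cmod p) * cnj (cis th) * cnj y"
        by (subst pth, subst qy) simp
      also have "\<dots> = of_real (cmod p) * cnj y"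
        by (simp add: cis_cnj cis_mult mult.commute mult.left_commute)
      finally have "Re (p * cnj q) = cmod p * Re y" by simp
      then show ?thesis using Rpq False by simp
    qed
    then have yI: "y = \<i> * of_real (Im y)" by (simp add: complex_eq_iff)
    have "cmod q = cmod y" by (simp add: qy norm_mult)
    moreover have "cmod y = \<bar>Im y\<bar>" using \<open>Re y = 0\<close> by (rule cmod_eq_Im)
    ultimately have "(cmod p)\<^sup>2 + (Im y)\<^sup>2 = 1" using pq1 by (simp add: power2_abs)
    then obtain g where g: "cmod p = cos g" "Im y = sin g" by (metis sincos_total_2pi)
    show ?thesis
      by (rule that[of th g]) (use pth qy yI g in auto)
  qed
  show ?thesis
  proof (intro exI conjI)
    show "ws = cis th * (of_real (cos g) * of_real (cos x) - \<i> * of_real (sin g) * of_real (sin x))"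
      unfolding inv1 thg c_def s_def by (simp add: algebra_simps)
    show "wt = cis th * (\<i> * of_real (sin g) * of_real (cos x) + of_real (cos g) * of_real (sin x))"
      unfolding inv2 thg c_def s_def by (simp add: algebra_simps)
  qed
qed


definition ip :: "cvec \<Rightarrow> cvec \<Rightarrow> complex" where
  "ip u v = (\<Sum>a<2. cnj (u a) * v a)"

definition ap :: "cmat \<Rightarrow> cvec \<Rightarrow> cvec" where
  "ap M v = (\<lambda>a. \<Sum>b<2. M a b * v b)"

definition csm :: "real \<Rightarrow> cmat \<Rightarrow> cmat" where
  "csm t R = (\<lambda>a b. of_real (cos t) * idm 2 a b + \<i> * of_real (sin t) * R a b)"

lemma less2: "(a::nat) < 2 \<longleftrightarrow> a = 0 \<or> a = 1" by auto

lemma ip_cong: "(\<And>a. a < 2 \<Longrightarrow> x a = x' a) \<Longrightarrow> (\<And>a. a < 2 \<Longrightarrow> y a = y' a) \<Longrightarrow> ip x y = ip x' y'"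
  by (simp add: ip_def less2 sum2)

lemma ap_cong: "(\<And>a. a < 2 \<Longrightarrow> x a = x' a) \<Longrightarrow> ap M x = ap M x'"
  by (simp add: ap_def less2 sum2)

lemma ip_lin2: "ip u (\<lambda>a. x * v a + y * w a) = x * ip u v + y * ip u w"
  by (simp add: ip_def sum2 algebra_simps)

lemma ip_lin1: "ip (\<lambda>a. x * v a + y * w a) u = cnj x * ip v u + cnj y * ip w u"
  by (simp add: ip_def sum2 algebra_simps)

lemma ip_scale2: "ip u (\<lambda>a. x * v a) = x * ip u v"
  by (simp add: ip_def sum2 algebra_simps)

lemma ip_scale1: "ip (\<lambda>a. x * v a) u = cnj x * ip v u"
  by (simp add: ip_def sum2 algebra_simps)

lemma ip_cnj: "cnj (ip u v) = ip v u"
  by (simp add: ip_def sum2 mult.commute)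

lemma ap_lin: "ap M (\<lambda>a. x * v a + y * w a) = (\<lambda>a. x * ap M v a + y * ap M w a)"
  by (simp add: ap_def sum2 algebra_simps)

lemma ap_scale: "ap M (\<lambda>a. x * v a) = (\<lambda>a. x * ap M v a)"
  by (simp add: ap_def sum2 algebra_simps)

lemma pa_sq: "a < 2 \<Longrightarrow> ap (sigma p) (ap (sigma p) x) a = x a"
  by (cases p) (auto simp: ap_def sigma_def sum2 less2)

lemma pa_anti: "p \<noteq> q \<Longrightarrow> p \<noteq> PI \<Longrightarrow> q \<noteq> PI \<Longrightarrow> a < 2 \<Longrightarrow>
    ap (sigma p) (ap (sigma q) x) a = - ap (sigma q) (ap (sigma p) x) a"
  by (cases p; cases q) (auto simp: ap_def sigma_def sum2 less2)

lemma pa_herm: "ip (ap (sigma p) x) y = ip x (ap (sigma p) y)"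
  by (cases p) (auto simp: ip_def ap_def sigma_def sum2 algebra_simps)

lemma decomp2:
  assumes uu: "ip u u = 1" and vv: "ip v v = 1" and uv: "ip u v = 0" and a: "a < 2"
  shows "x a = ip u x * u a + ip v x * v a"
proof -
  define y where "y = (\<lambda>a. x a - ip u x * u a - ip v x * v a)"
  have vu: "ip v u = 0" using uv ip_cnj[of u v] by simp
  have yu: "ip u y = 0"
  proof -
    have "ip u y = ip u x - ip u x * ip u u - ip v x * ip u v"
      by (simp add: y_def ip_def sum2 algebra_simps)
    then show ?thesis using uu uv by simp
  qed
  have yv: "ip v y = 0"
  proof -
    have "ip v y = ip v x - ip u x * ip v u - ip v x * ip v v"
      by (simp add: y_def ip_def sum2 algebra_simps)
    then show ?thesis using vv vu by simp
  qed
  define D where "D = cnj (u 0) * cnj (v 1) - cnj (u 1) * cnj (v 0)"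
  have "D * cnj D = ip u u * ip v v - ip u v * ip v u"
    by (simp add: D_def ip_def sum2 algebra_simps)
  then have "D * cnj D = 1" using uu vv uv by simp
  then have D0: "D \<noteq> 0" by auto
  have e1: "cnj (u 0) * y 0 + cnj (u 1) * y 1 = 0" using yu by (simp add: ip_def sum2)
  have e2: "cnj (v 0) * y 0 + cnj (v 1) * y 1 = 0" using yv by (simp add: ip_def sum2)
  have "D * y 0 = cnj (v 1) * (cnj (u 0) * y 0 + cnj (u 1) * y 1) - cnj (u 1) * (cnj (v 0) * y 0 + cnj (v 1) * y 1)"
    by (simp add: D_def algebra_simps)
  then have y0: "y 0 = 0" using e1 e2 D0 by simp
  have "D * y 1 = cnj (u 0) * (cnj (v 0) * y 0 + cnj (v 1) * y 1) - cnj (v 0) * (cnj (u 0) * y 0 + cnj (u 1) * y 1)"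
    by (simp add: D_def algebra_simps)
  then have y1: "y 1 = 0" using e1 e2 D0 by simp
  have "y a = 0" using a y0 y1 by (auto simp: less2)
  then have "x a - ip u x * u a - ip v x * v a = 0" by (simp add: y_def)
  then show ?thesis by (simp add: algebra_simps)
qed

lemma qubit_reach:
  assumes p0: "p0 \<noteq> PI" and p1: "p1 \<noteq> PI" and p01: "p0 \<noteq> p1"
    and ss: "ip s s = 1" and s0: "ip s (ap (sigma p0) s) = 0" and s1: "ip s (ap (sigma p1) s) = 0"
    and ww: "ip w w = 1"
  shows "\<exists>\<beta> \<gamma> \<delta>. \<forall>a<2. ap (csm \<beta> (sigma p1)) (ap (csm \<gamma> (sigma p0)) s) a = cis \<delta> * w a"
proof -
  define A where "A = sigma p0"
  define B where "B = sigma p1"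
  define t where "t = ap A s"
  have AA: "a < 2 \<Longrightarrow> ap A (ap A x) a = x a" for a x unfolding A_def by (rule pa_sq)
  have BB: "a < 2 \<Longrightarrow> ap B (ap B x) a = x a" for a x unfolding B_def by (rule pa_sq)
  have AB: "a < 2 \<Longrightarrow> ap B (ap A x) a = - ap A (ap B x) a" for a x
    unfolding A_def B_def using pa_anti[OF p01[symmetric] p1 p0] by blast
  have Ah: "ip (ap A x) y = ip x (ap A y)" for x y unfolding A_def by (rule pa_herm)
  have Bh: "ip (ap B x) y = ip x (ap B y)" for x y unfolding B_def by (rule pa_herm)
  have tt: "ip t t = 1"
  proof -
    have "ip t t = ip s (ap A (ap A s))" by (simp add: t_def Ah)
    also have "\<dots> = ip s s" by (rule ip_cong) (simp_all add: AA)
    finally show ?thesis using ss by simp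
  qed
  have st: "ip s t = 0" using s0 by (simp add: t_def A_def)
  have ts: "ip t s = 0" using st ip_cnj[of s t] by simp
  define c where "c = ip t (ap B s)"
  have Bs: "ap B s a = c * t a" if "a < 2" for a
    using decomp2[OF ss tt st that, of "ap B s"] s1 by (simp add: c_def B_def)
  have At: "ap A t a = s a" if "a < 2" for a using AA[OF that] by (simp add: t_def)
  have Bt: "ap B t a = - c * s a" if "a < 2" for a
  proof -
    have "ap B t a = - ap A (ap B s) a" using AB[OF that] by (simp add: t_def)
    also have "ap A (ap B s) = ap A (\<lambda>a. c * t a)" by (rule ap_cong) (simp add: Bs)
    also have "\<dots> a = c * s a" by (simp add: ap_scale At that)
    finally show ?thesis by simp
  qed
  have cc: "cnj c = - c"
  proof -
    have "ip s (ap B t) = ip s (\<lambda>a. - c * s a)" by (rule ip_cong) (simp_all add: Bt)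
    also have "\<dots> = - c" using ip_scale2[of s "- c" s] ss by simp
    finally have l: "ip s (ap B t) = - c" .
    have "ip (ap B s) t = ip (\<lambda>a. c * t a) t" by (rule ip_cong) (simp_all add: Bs)
    also have "\<dots> = cnj c" using ip_scale1[of c t t] tt by simp
    finally have r: "ip (ap B s) t = cnj c" .
    show ?thesis using l r Bh[of s t] by simp
  qed
  have c1: "c * cnj c = 1"
  proof -
    have "ip (ap B s) (ap B s) = ip s (ap B (ap B s))" by (rule Bh)
    also have "\<dots> = ip s s" by (rule ip_cong) (simp_all add: BB)
    finally have e: "ip (ap B s) (ap B s) = 1" using ss by simp
    have "ip (ap B s) (ap B s) = ip (\<lambda>a. c * t a) (\<lambda>a. c * t a)" by (rule ip_cong) (simp_all add: Bs)
    also have "\<dots> = cnj c * (c * ip t t)" by (simp add: ip_scale1 ip_scale2)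
    finally show ?thesis using e tt by (simp add: mult.commute)
  qed
  have cpm: "c = \<i> \<or> c = - \<i>"
  proof -
    have "Re c = 0" using cc by (simp add: complex_eq_iff)
    moreover have "(Re c)\<^sup>2 + (Im c)\<^sup>2 = 1" using c1
      by (simp add: complex_eq_iff power2_eq_square algebra_simps)
    ultimately have "Im c = 1 \<or> Im c = -1" by (simp add: power2_eq_1_iff)
    then show ?thesis using \<open>Re c = 0\<close> by (auto simp: complex_eq_iff)
  qed
  define ws where "ws = ip s w"
  define wt where "wt = ip t w"
  have wdec: "w a = ws * s a + wt * t a" if "a < 2" for a
    using decomp2[OF ss tt st that] by (simp add: ws_def wt_def)
  have wunit: "(cmod ws)\<^sup>2 + (cmod wt)\<^sup>2 = 1"
  proof -
    have "ip w w = ip (\<lambda>a. ws * s a + wt * t a) (\<lambda>a. ws * s a + wt * t a)"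
      by (rule ip_cong) (simp_all add: wdec)
    also have "\<dots> = cnj ws * ws + cnj wt * wt"
      by (simp add: ip_lin1 ip_lin2 ss tt st ts)
    also have "\<dots> = complex_of_real ((cmod ws)\<^sup>2 + (cmod wt)\<^sup>2)"
      by (simp only: of_real_add cmod_sq_cnj mult.commute)
    finally show ?thesis using ww by (metis of_real_eq_1_iff)
  qed
  obtain b g th where bg:
      "ws = cis th * (of_real (cos g) * of_real (cos b) - \<i> * of_real (sin g) * of_real (sin b))"
      "wt = cis th * (\<i> * of_real (sin g) * of_real (cos b) + of_real (cos g) * of_real (sin b))"
    using rot_solve[OF wunit] by blast
  define \<beta> where "\<beta> = (if c = - \<i> then b else - b)"
  have step1: "ap (csm g A) s a = of_real (cos g) * s a + \<i> * of_real (sin g) * t a" if "a < 2" for a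
    using that unfolding less2
    by (elim disjE) (simp_all add: csm_def ap_def sum2 t_def idm_def algebra_simps)
  have res: "ap (csm \<beta> B) (ap (csm g A) s) a = cis (- th) * w a" if a: "a < 2" for a
  proof -
    have eq: "ap (csm \<beta> B) (ap (csm g A) s) = ap (csm \<beta> B) (\<lambda>a. of_real (cos g) * s a + (\<i> * of_real (sin g)) * t a)"
      by (rule ap_cong) (simp add: step1)
    have "ap (csm \<beta> B) (ap (csm g A) s) a = ap (csm \<beta> B) (\<lambda>a. of_real (cos g) * s a + (\<i> * of_real (sin g)) * t a) a"
      by (simp only: eq)
    also have "\<dots> = of_real (cos \<beta>) * (of_real (cos g) * s a + \<i> * of_real (sin g) * t a)
        + \<i> * of_real (sin \<beta>) * (of_real (cos g) * ap B s a + \<i> * of_real (sin g) * ap B t a)"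
      using a unfolding less2
      by (elim disjE) (simp_all add: csm_def ap_def sum2 idm_def algebra_simps)
    also have "\<dots> = of_real (cos \<beta>) * (of_real (cos g) * s a + \<i> * of_real (sin g) * t a)
        + \<i> * of_real (sin \<beta>) * (of_real (cos g) * c * t a - \<i> * of_real (sin g) * c * s a)"
      using a by (simp add: Bs Bt algebra_simps)
    also have "\<dots> = (of_real (cos g) * of_real (cos b) - \<i> * of_real (sin g) * of_real (sin b)) * s a
        + (\<i> * of_real (sin g) * of_real (cos b) + of_real (cos g) * of_real (sin b)) * t a"
      using cpm by (auto simp: \<beta>_def algebra_simps)
    also have "\<dots> = cis (- th) * ws * s a + cis (- th) * wt * t a"
    proof -
      have h: "cis (- th) * (cis th * z) = z" for z
        by (simp add: mult.assoc[symmetric] cis_mult)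
      show ?thesis unfolding bg h ..
    qed
    also have "\<dots> = cis (- th) * (ws * s a + wt * t a)" by (simp add: algebra_simps)
    also have "\<dots> = cis (- th) * w a" using wdec[OF a] by simp
    finally show ?thesis .
  qed
  show ?thesis using res unfolding A_def B_def by blast
qed


definition prj :: "nat \<Rightarrow> cmat list \<Rightarrow> nat set \<Rightarrow> cmat" where
  "prj m gs E = (\<lambda>a b. (1 / 2 ^ m) * Qm m gs E a b)"

lemma mvec_scale: "mvec d (\<lambda>i j. c * A i j) v = (\<lambda>i. c * mvec d A v i)"
  by (auto simp: mvec_def sum_distrib_left mult_ac intro!: ext)

context stab
begin

lemma prj_herm: "cnj (prj m gs E b a) = prj m gs E a b"
  by (simp add: prj_def Q_herm)

lemma prj_mul:
  assumes "E \<subseteq> {..<m}" "E' \<subseteq> {..<m}" "i < 2 ^ m" "j < 2 ^ m"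
  shows "(\<Sum>k<2 ^ m. prj m gs E i k * prj m gs E' k j) = (if E = E' then prj m gs E i j else 0)"
proof -
  have "(\<Sum>k<2 ^ m. Qm m gs E i k * Qm m gs E' k j) = mmul (2 ^ m) (Qm m gs E) (Qm m gs E') i j"
    using assms by (simp add: mmul_def)
  also have "\<dots> = (if E = E' then 2 ^ m else 0) * Qm m gs E' i j"
    by (simp add: Q_Q[OF assms(1,2)])
  finally have e: "(\<Sum>k<2 ^ m. Qm m gs E i k * Qm m gs E' k j) = (if E = E' then 2 ^ m else 0) * Qm m gs E' i j" .
  have "(\<Sum>k<2 ^ m. prj m gs E i k * prj m gs E' k j) = (1 / 2 ^ m) * (1 / 2 ^ m) * (\<Sum>k<2 ^ m. Qm m gs E i k * Qm m gs E' k j)"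
    by (simp add: prj_def sum_distrib_left mult_ac)
  also have "\<dots> = (if E = E' then prj m gs E i j else 0)"
    unfolding e by (simp add: prj_def)
  finally show ?thesis .
qed

lemma prj_tr: "E \<subseteq> {..<m} \<Longrightarrow> (\<Sum>i<2 ^ m. prj m gs E i i) = 1"
  unfolding prj_def sum_distrib_left[symmetric] by (simp add: Q_trace)

lemma prj_sum: "(\<Sum>E\<in>Pow {..<m}. prj m gs E a b) = idm (2 ^ m) a b"
  unfolding prj_def sum_distrib_left[symmetric] by (simp add: Q_sum)

lemma S_prj:
  assumes "A \<subseteq> {..<m}"
  shows "mvec (2 ^ m) (gen_prod m gs A) (mvec (2 ^ m) (prj m gs E) x) = (\<lambda>i. chi E A * mvec (2 ^ m) (prj m gs E) x i)"
proof -
  have "mmul (2 ^ m) (gen_prod m gs A) (prj m gs E) = (\<lambda>a b. chi E A * prj m gs E a b)"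
    unfolding prj_def mmul_scale_right S_Q[OF assms] by (simp add: mult_ac)
  then show ?thesis by (simp add: mvec_mmul[symmetric] mvec_scale)
qed

lemma coeff_choice:
  assumes p0: "p0 \<noteq> PI" and p1: "p1 \<noteq> PI" and p01: "p0 \<noteq> p1"
    and ss: "ip sv sv = 1" and s0: "ip sv (ap (sigma p0) sv) = 0" and s1: "ip sv (ap (sigma p1) sv) = 0"
    and phi: "(\<Sum>i<2 ^ Suc m. (cmod (\<phi> i))\<^sup>2) = 1"
  shows "\<exists>\<psi> \<beta> \<gamma>. (\<Sum>l<2 ^ m. (cmod (\<psi> l))\<^sup>2) = 1 \<and>
           (\<forall>l<2 ^ m. \<forall>b<2. (\<Sum>E\<in>Pow {..<m}. mvec (2 ^ m) (prj m gs E) \<psi> l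
                 * ap (csm (\<beta> E) (sigma p1)) (ap (csm (\<gamma> E) (sigma p0)) sv) b) = \<phi> (l + b * 2 ^ m))"
proof -
  define d where "d = (2::nat) ^ m"
  define PE where "PE = Pow {..<m}"
  have fPE: "finite PE" by (simp add: PE_def)
  have "\<forall>E\<in>PE. \<exists>e. (\<Sum>i<d. (cmod (e i))\<^sup>2) = 1 \<and> (\<forall>i<d. \<forall>j<d. prj m gs E i j = e i * cnj (e j))"
  proof
    fix E assume E: "E \<in> PE"
    show "\<exists>e. (\<Sum>i<d. (cmod (e i))\<^sup>2) = 1 \<and> (\<forall>i<d. \<forall>j<d. prj m gs E i j = e i * cnj (e j))"
      unfolding d_def
    proof (rule rank_one)
      show "cnj (prj m gs E j i) = prj m gs E i j" for i j by (rule prj_herm)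
      show "(\<Sum>k<2 ^ m. prj m gs E i k * prj m gs E k j) = prj m gs E i j" if "i < 2 ^ m" "j < 2 ^ m" for i j
        using prj_mul[of E E i j] E that by (simp add: PE_def)
      show "(\<Sum>i<2 ^ m. prj m gs E i i) = 1" using prj_tr E by (simp add: PE_def)
    qed
  qed
  then obtain e where e: "\<And>E. E \<in> PE \<Longrightarrow> (\<Sum>i<d. (cmod (e E i))\<^sup>2) = 1"
      "\<And>E i j. E \<in> PE \<Longrightarrow> i < d \<Longrightarrow> j < d \<Longrightarrow> prj m gs E i j = e E i * cnj (e E j)"
    by metis
  have enorm: "(\<Sum>l<d. cnj (e E l) * e E l) = 1" if "E \<in> PE" for E
  proof -
    have "(\<Sum>l<d. cnj (e E l) * e E l) = of_real (\<Sum>i<d. (cmod (e E i))\<^sup>2)"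
      by (simp only: of_real_sum cmod_sq_cnj mult.commute)
    then show ?thesis using e(1)[OF that] by simp
  qed
  have ortho: "(\<Sum>l<d. cnj (e E l) * e E' l) = (if E = E' then 1 else 0)" if hE: "E \<in> PE" "E' \<in> PE" for E E'
  proof (cases "E = E'")
    case True then show ?thesis using enorm that by simp
  next
    case False
    have ex: "\<exists>i<d. e F i \<noteq> 0" if "F \<in> PE" for F
    proof (rule ccontr)
      assume "\<not> (\<exists>i<d. e F i \<noteq> 0)"
      then have "(\<Sum>i<d. (cmod (e F i))\<^sup>2) = 0" by simp
      then show False using e(1)[OF that] by simp
    qed
    obtain i where i: "i < d" "e E i \<noteq> 0" using ex[OF hE(1)] by blast
    obtain j where j: "j < d" "e E' j \<noteq> 0" using ex[OF hE(2)] by blast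
    have "(\<Sum>k<d. prj m gs E i k * prj m gs E' k j) = 0"
      using prj_mul[of E E' i j] hE False i j by (simp add: PE_def d_def)
    moreover have "(\<Sum>k<d. prj m gs E i k * prj m gs E' k j) = e E i * (\<Sum>k<d. cnj (e E k) * e E' k) * cnj (e E' j)"
      using hE i j by (simp add: e(2) sum_distrib_left sum_distrib_right mult_ac)
    ultimately show ?thesis using False i j by simp
  qed
  define wv where "wv = (\<lambda>E b. \<Sum>l<d. cnj (e E l) * \<phi> (l + b * d))"
  define rr where "rr = (\<lambda>E. sqrt ((cmod (wv E 0))\<^sup>2 + (cmod (wv E 1))\<^sup>2))"
  let ?V = "\<lambda>\<beta> \<gamma>. ap (csm \<beta> (sigma p1)) (ap (csm \<gamma> (sigma p0)) sv)"
  have "\<forall>E. \<exists>\<beta> \<gamma> \<delta>. \<forall>b<2. of_real (rr E) * cis (- \<delta>) * ?V \<beta> \<gamma> b = wv E b"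
  proof
    fix E
    show "\<exists>\<beta> \<gamma> \<delta>. \<forall>b<2. of_real (rr E) * cis (- \<delta>) * ?V \<beta> \<gamma> b = wv E b"
    proof (cases "rr E = 0")
      case True
      then have "(cmod (wv E 0))\<^sup>2 + (cmod (wv E 1))\<^sup>2 = 0" by (simp add: rr_def)
      then have "wv E 0 = 0" "wv E 1 = 0"
        by (metis add_nonneg_eq_0_iff norm_eq_zero power_not_zero zero_le_power2)+
      then show ?thesis using True by (auto simp: less2)
    next
      case False
      define w where "w = (\<lambda>b. wv E b / of_real (rr E))"
      have "rr E \<ge> 0" by (simp add: rr_def)
      then have rpos: "rr E > 0" using False by linarith
      have "ip w w = 1"
      proof -
        have "ip w w = (cnj (wv E 0) * wv E 0 + cnj (wv E 1) * wv E 1) / (of_real (rr E) * of_real (rr E))"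
          by (simp add: ip_def sum2 w_def add_divide_distrib)
        also have "cnj (wv E 0) * wv E 0 + cnj (wv E 1) * wv E 1 = of_real ((cmod (wv E 0))\<^sup>2 + (cmod (wv E 1))\<^sup>2)"
          by (simp only: of_real_add cmod_sq_cnj mult.commute)
        also have "\<dots> = of_real (rr E) * of_real (rr E)"
          by (simp add: rr_def flip: of_real_mult)
        finally show ?thesis using rpos by simp
      qed
      then obtain \<beta> \<gamma> \<delta> where bgd: "\<forall>a<2. ?V \<beta> \<gamma> a = cis \<delta> * w a"
        using qubit_reach[OF p0 p1 p01 ss s0 s1] by blast
      show ?thesis
      proof (intro exI allI impI)
        fix b :: nat assume "b < 2"
        then show "of_real (rr E) * cis (- \<delta>) * ?V \<beta> \<gamma> b = wv E b"
          using bgd rpos by (simp add: w_def mult.assoc[symmetric] cis_mult flip: cis_inverse) 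
      qed
    qed
  qed
  then obtain \<beta> \<gamma> \<delta> where bgd: "\<And>E b. b < 2 \<Longrightarrow> of_real (rr E) * cis (- \<delta> E) * ?V (\<beta> E) (\<gamma> E) b = wv E b"
    by metis
  define c where "c = (\<lambda>E. of_real (rr E) * cis (- \<delta> E))"
  define \<psi> where "\<psi> = (\<lambda>l. \<Sum>E\<in>PE. c E * e E l)"
  have Ppsi: "mvec d (prj m gs E) \<psi> l = e E l * c E" if "E \<in> PE" "l < d" for E l
  proof -
    have "mvec d (prj m gs E) \<psi> l = (\<Sum>l'<d. e E l * cnj (e E l') * (\<Sum>E'\<in>PE. c E' * e E' l'))"
      using that by (simp add: mvec_def e(2) \<psi>_def)
    also have "\<dots> = e E l * (\<Sum>E'\<in>PE. c E' * (\<Sum>l'<d. cnj (e E l') * e E' l'))"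
      by (simp add: sum_distrib_left mult_ac sum.swap[of _ PE])
    also have "\<dots> = e E l * (\<Sum>E'\<in>PE. c E' * (if E = E' then 1 else 0))"
      using that ortho by (intro arg_cong[where f = "(*) _"] sum.cong) auto
    also have "\<dots> = e E l * c E" using that fPE by (simp add: if_distrib cong: if_cong)
    finally show ?thesis .
  qed
  have complete: "(\<Sum>E\<in>PE. e E l * cnj (e E l')) = idm d l l'" if "l < d" "l' < d" for l l'
    using prj_sum[of l l'] that by (simp add: PE_def d_def e(2)[unfolded PE_def d_def])
  have main: "(\<Sum>E\<in>PE. mvec d (prj m gs E) \<psi> l * ?V (\<beta> E) (\<gamma> E) b) = \<phi> (l + b * d)" if "l < d" "b < 2" for l b
  proof -
    have "(\<Sum>E\<in>PE. mvec d (prj m gs E) \<psi> l * ?V (\<beta> E) (\<gamma> E) b) = (\<Sum>E\<in>PE. e E l * wv E b)"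
      using that by (intro sum.cong refl) (simp add: Ppsi c_def bgd[symmetric] mult_ac)
    also have "\<dots> = (\<Sum>l'<d. (\<Sum>E\<in>PE. e E l * cnj (e E l')) * \<phi> (l' + b * d))"
      by (simp add: wv_def sum_distrib_left sum_distrib_right mult_ac sum.swap[of _ PE])
    also have "\<dots> = (\<Sum>l'<d. idm d l l' * \<phi> (l' + b * d))"
      using that complete by (intro sum.cong refl) auto
    also have "\<dots> = \<phi> (l + b * d)"
    proof -
      have "(\<Sum>l'<d. idm d l l' * \<phi> (l' + b * d)) = (\<Sum>l'<d. if l' = l then \<phi> (l + b * d) else 0)"
        using that by (intro sum.cong refl) (auto simp: idm_def)
      then show ?thesis using that by simp
    qed
    finally show ?thesis .
  qed
  have pars: "(\<Sum>E\<in>PE. cnj (wv E b) * wv E b) = (\<Sum>l<d. cnj (\<phi> (l + b * d)) * \<phi> (l + b * d))" for b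
  proof -
    have "(\<Sum>E\<in>PE. cnj (wv E b) * wv E b)
        = (\<Sum>E\<in>PE. \<Sum>l<d. \<Sum>l'<d. cnj (\<phi> (l + b * d)) * \<phi> (l' + b * d) * (e E l * cnj (e E l')))"
      by (simp add: wv_def cnj_sum sum_product mult_ac)
    also have "\<dots> = (\<Sum>l<d. \<Sum>l'<d. cnj (\<phi> (l + b * d)) * \<phi> (l' + b * d) * (\<Sum>E\<in>PE. e E l * cnj (e E l')))"
      by (simp add: sum_distrib_left sum.swap[of _ PE])
    also have "\<dots> = (\<Sum>l<d. \<Sum>l'<d. cnj (\<phi> (l + b * d)) * \<phi> (l' + b * d) * idm d l l')"
      using complete by (intro sum.cong refl) auto
    also have "\<dots> = (\<Sum>l<d. cnj (\<phi> (l + b * d)) * \<phi> (l + b * d))"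
    proof (intro sum.cong refl)
      fix l assume "l \<in> {..<d}"
      then have "(\<Sum>l'<d. cnj (\<phi> (l + b * d)) * \<phi> (l' + b * d) * idm d l l') = (\<Sum>l'<d. if l' = l then cnj (\<phi> (l + b * d)) * \<phi> (l + b * d) else 0)"
        by (intro sum.cong refl) (auto simp: idm_def)
      then show "(\<Sum>l'<d. cnj (\<phi> (l + b * d)) * \<phi> (l' + b * d) * idm d l l') = cnj (\<phi> (l + b * d)) * \<phi> (l + b * d)"
        using \<open>l \<in> {..<d}\<close> by simp
    qed
    finally show ?thesis .
  qed
  have unit: "(\<Sum>l<d. (cmod (\<psi> l))\<^sup>2) = 1"
  proof -
    have "complex_of_real (\<Sum>l<d. (cmod (\<psi> l))\<^sup>2) = (\<Sum>l<d. cnj (\<psi> l) * \<psi> l)"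
      by (simp only: of_real_sum cmod_sq_cnj mult.commute)
    also have "\<dots> = (\<Sum>l<d. \<Sum>E\<in>PE. \<Sum>E'\<in>PE. c E * cnj (c E') * (cnj (e E' l) * e E l))"
      by (simp add: \<psi>_def cnj_sum sum_product mult_ac)
    also have "\<dots> = (\<Sum>E\<in>PE. \<Sum>E'\<in>PE. \<Sum>l<d. c E * cnj (c E') * (cnj (e E' l) * e E l))"
      by (rule trans[OF sum.swap]) (intro sum.cong refl sum.swap)
    also have "\<dots> = (\<Sum>E\<in>PE. \<Sum>E'\<in>PE. c E * cnj (c E') * (\<Sum>l<d. cnj (e E' l) * e E l))"
      by (simp add: sum_distrib_left)
    also have "\<dots> = (\<Sum>E\<in>PE. \<Sum>E'\<in>PE. if E' = E then cnj (c E) * c E else 0)"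
      using ortho by (intro sum.cong refl) auto
    also have "\<dots> = (\<Sum>E\<in>PE. cnj (c E) * c E)" using fPE by simp
    also have "\<dots> = (\<Sum>E\<in>PE. cnj (wv E 0) * wv E 0 + cnj (wv E 1) * wv E 1)"
    proof (intro sum.cong refl)
      fix E
      have "cnj (c E) * c E = of_real (rr E * rr E)"
        by (simp add: c_def cis_cnj cis_mult mult_ac flip: cis_inverse)
      also have "\<dots> = of_real ((cmod (wv E 0))\<^sup>2 + (cmod (wv E 1))\<^sup>2)"
        by (simp add: rr_def)
      also have "\<dots> = cnj (wv E 0) * wv E 0 + cnj (wv E 1) * wv E 1"
        by (simp only: of_real_add cmod_sq_cnj mult.commute)
      finally show "cnj (c E) * c E = cnj (wv E 0) * wv E 0 + cnj (wv E 1) * wv E 1" .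
    qed
    also have "\<dots> = (\<Sum>b<2. \<Sum>l<d. cnj (\<phi> (l + b * d)) * \<phi> (l + b * d))"
      by (simp add: sum.distrib pars sum2)
    also have "\<dots> = (\<Sum>i<2 * d. cnj (\<phi> i) * \<phi> i)"
      by (simp add: sum_mult_product)
    also have "\<dots> = complex_of_real (\<Sum>i<2 ^ Suc m. (cmod (\<phi> i))\<^sup>2)"
      by (simp only: of_real_sum cmod_sq_cnj mult.commute d_def power_Suc)
    finally show ?thesis using phi by (metis of_real_eq_1_iff)
  qed
  show ?thesis
    using unit main unfolding d_def PE_def by blast
qed

end


lemma R1_R1: "R1 R (R1 R' y) = R1 (mmul 2 R R') y"
proof
  fix h
  have e: "(h div 2 * 2 + b) mod 2 = b" "(h div 2 * 2 + b) div 2 = h div 2" if "b < (2::nat)" for b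
    using that by auto
  have "R1 R (R1 R' y) h = (\<Sum>b<2. R (h mod 2) b * (\<Sum>b'<2. R' b b' * y (h div 2 * 2 + b')))"
    by (simp add: R1_def e sum2)
  also have "\<dots> = R1 (mmul 2 R R') y h"
    by (simp add: R1_def mmul_def sum2 algebra_simps)
  finally show "R1 R (R1 R' y) h = R1 (mmul 2 R R') y h" .
qed

lemma R1_idm: "R1 (idm 2) y = y"
proof
  fix h :: nat
  have h: "h = h div 2 * 2 + h mod 2" by simp
  have "h mod 2 = 0 \<or> h mod 2 = 1" by auto
  then show "R1 (idm 2) y h = y h"
  proof
    assume a: "h mod 2 = 0"
    then have "h div 2 * 2 = h" using h by simp
    then show ?thesis using a by (simp add: R1_def idm_def sum2)
  next
    assume a: "h mod 2 = 1"
    then have "Suc (h div 2 * 2) = h" using h by simp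
    then show ?thesis using a by (simp add: R1_def idm_def sum2)
  qed
qed

lemma R1_lin: "R1 (\<lambda>a b. c1 * M1 a b + c2 * M2 a b) y = (\<lambda>h. c1 * R1 M1 y h + c2 * R1 M2 y h)"
  by (simp add: R1_def sum2 algebra_simps)

lemma R1_resm: "R1 (resm 2 M) y = R1 M y"
  by (simp add: R1_def resm_def sum2)

lemma mmul_resm_right: "mmul d A (resm d B) = mmul d A B"
  by (auto simp: mmul_def resm_def intro!: ext sum.cong)

lemma prodv_restr: "prodv N m (restr (2 ^ m) x) y = prodv N m x y"
  by (rule ext) (simp add: prodv_def restr_def)

lemma restr_prodv[simp]: "restr (2 ^ N) (prodv N m x y) = prodv N m x y"
  by (auto simp: prodv_def restr_def)

lemma prodv_lin2: "prodv N m x (\<lambda>h. a * y h + b * y' h) = (\<lambda>i. a * prodv N m x y i + b * prodv N m x y' i)"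
  by (auto simp: prodv_def algebra_simps)

lemma prodv_scale1: "prodv N m (\<lambda>l. c * x l) y = (\<lambda>i. c * prodv N m x y i)"
  by (auto simp: prodv_def algebra_simps)

lemma prodv_sum1: "prodv N m (\<lambda>l. \<Sum>E\<in>K. f E l) y = (\<lambda>i. \<Sum>E\<in>K. prodv N m (f E) y i)"
  by (auto simp: prodv_def sum_distrib_right)

lemma mvec_sumv: "mvec d A (\<lambda>i. \<Sum>E\<in>K. f E i) = (\<lambda>i. \<Sum>E\<in>K. mvec d A (f E) i)"
  by (auto simp: mvec_def sum_distrib_left intro!: ext sum.swap)

lemma mvec_scalev: "mvec d A (\<lambda>i. c * v i) = (\<lambda>i. c * mvec d A v i)"
  by (auto simp: mvec_def sum_distrib_left mult_ac intro!: ext)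

lemma restr_sum: "(\<And>E. E \<in> K \<Longrightarrow> restr d (f E) = f E) \<Longrightarrow> restr d (\<lambda>i. \<Sum>E\<in>K. f E i) = (\<lambda>i. \<Sum>E\<in>K. f E i)"
  by (auto simp: restr_def fun_eq_iff intro!: sum.neutral) (metis)

definition dl :: "nat \<Rightarrow> cvec" where "dl j = (\<lambda>i. if i = j then 1 else 0)"

lemma mmul_col: "j < d \<Longrightarrow> mmul d A B i j = mvec d A (mvec d B (dl j)) i"
proof -
  assume j: "j < d"
  have "mvec d B (dl j) = (\<lambda>k. if k < d then B k j else 0)"
  proof
    fix k
    have "(\<Sum>l<d. B k l * (if l = j then 1 else 0)) = (\<Sum>l<d. if l = j then B k j else 0)"
      by (rule sum.cong) auto
    then show "mvec d B (dl j) k = (if k < d then B k j else 0)" using j by (simp add: mvec_def dl_def)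
  qed
  then show ?thesis using j by (auto simp: mmul_def mvec_def intro!: sum.cong)
qed

lemma dl_prodv:
  assumes "j < 2 ^ N"
  shows "restr (2 ^ N) (dl j) = prodv N m (dl (j mod 2 ^ m)) (dl (j div 2 ^ m))"
proof
  fix i
  have "(i = j) \<longleftrightarrow> (i mod 2 ^ m = j mod 2 ^ m \<and> i div 2 ^ m = j div 2 ^ m)"
    by (metis div_mult_mod_eq)
  then show "restr (2 ^ N) (dl j) i = prodv N m (dl (j mod 2 ^ m)) (dl (j div 2 ^ m)) i"
    by (auto simp: restr_def prodv_def dl_def)
qed

lemma sigma_sq: "mmul 2 (sigma p) (sigma p) = idm 2"
proof (intro ext)
  fix a b
  show "mmul 2 (sigma p) (sigma p) a b = idm 2 a b"
    using sigma_sq_entry[of a b p] by (auto simp: mmul_def idm_def)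
qed

lemma embed_sq:
  assumes mN: "Suc m \<le> N" and SS: "mmul (2 ^ m) S S = idm (2 ^ m)" and RR: "mmul 2 R R = idm 2"
  shows "mmul (2 ^ N) (embed_RS N (Suc m) R S) (embed_RS N (Suc m) R S) = idm (2 ^ N)"
proof (intro ext)
  fix i j
  let ?P = "embed_RS N (Suc m) R S"
  show "mmul (2 ^ N) ?P ?P i j = idm (2 ^ N) i j"
  proof (cases "j < 2 ^ N")
    case False then show ?thesis by (simp add: mmul_def idm_def)
  next
    case True
    let ?x = "dl (j mod 2 ^ m)" and ?y = "dl (j div 2 ^ m)"
    have "mmul (2 ^ N) ?P ?P i j = mvec (2 ^ N) ?P (mvec (2 ^ N) ?P (dl j)) i"
      using True by (rule mmul_col)
    also have "mvec (2 ^ N) ?P (dl j) = mvec (2 ^ N) ?P (prodv N m ?x ?y)"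
    proof -
      have "mvec (2 ^ N) ?P (dl j) = mvec (2 ^ N) ?P (restr (2 ^ N) (dl j))" by (simp add: mvec_restr)
      then show ?thesis by (simp only: dl_prodv[where m=m, OF True])
    qed
    also have "mvec (2 ^ N) ?P (mvec (2 ^ N) ?P (prodv N m ?x ?y))
        = prodv N m (mvec (2 ^ m) S (mvec (2 ^ m) S ?x)) (R1 R (R1 R ?y))"
      by (simp add: embed_prodv[OF mN])
    also have "\<dots> = prodv N m ?x ?y"
      by (simp add: mvec_mmul[symmetric] SS mvec_idm prodv_restr R1_R1 RR R1_idm)
    also have "\<dots> = restr (2 ^ N) (dl j)" by (simp add: dl_prodv[where m=m, OF True])
    finally show ?thesis by (simp add: restr_def dl_def idm_def)
  qed
qed

lemma csm_add:
  assumes "mmul 2 R R = idm 2" "wfm 2 R"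
  shows "mmul 2 (csm a R) (csm b R) = csm (a + b) R"
proof -
  have "mmul 2 (csm a R) (csm b R) = (\<lambda>i j. of_real (cos a) * (of_real (cos b) * idm 2 i j + \<i> * of_real (sin b) * R i j)
          + \<i> * of_real (sin a) * (of_real (cos b) * R i j + \<i> * of_real (sin b) * idm 2 i j))"
    unfolding csm_def mmul_add_left mmul_add_right mmul_scale_left mmul_scale_right mmul_idm_left mmul_idm_right assms(1)
      resm_wfm[OF assms(2)] resm_wfm[OF wfm_idm] by (simp add: algebra_simps)
  also have "\<dots> = csm (a + b) R"
    by (auto simp: csm_def cos_add sin_add algebra_simps intro!: ext)
  finally show ?thesis .
qed

lemma wfm_sigma: "wfm 2 (sigma p)" by (simp add: wfm_def sigma_def)

lemma csm_zero: "csm 0 R = idm 2" by (simp add: csm_def)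

lemma mmul_csm: "mmul 2 (csm t R) M = (\<lambda>a b. of_real (cos t) * resm 2 M a b + \<i> * of_real (sin t) * mmul 2 R M a b)"
  unfolding csm_def mmul_add_left mmul_scale_left mmul_idm_left by simp


definition cr :: "nat set \<Rightarrow> nat set \<Rightarrow> real" where
  "cr E A = (-1) ^ card (A \<inter> E)"

lemma chi_cr: "finite A \<Longrightarrow> chi E A = of_real (cr E A)"
  by (simp add: chi_restrict cr_def)

lemma cr_pm: "cr E A = 1 \<or> cr E A = -1"
  by (cases "even (card (A \<inter> E))") (simp_all add: cr_def)

lemma cos_cr: "cos (t * cr E A) = cos t" and sin_cr: "sin (t * cr E A) = cr E A * sin t"
  using cr_pm[of E A] by auto

lemma char_orth_r:
  assumes "finite M" "E \<subseteq> M" "E' \<subseteq> M"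
  shows "(\<Sum>A\<in>Pow M. cr E A * cr E' A) = (if E = E' then 2 ^ card M else 0)"
proof -
  have "complex_of_real (\<Sum>A\<in>Pow M. cr E A * cr E' A) = (\<Sum>A\<in>Pow M. chi E A * chi E' A)"
    using assms(1) by (simp add: chi_cr finite_subset)
  also have "\<dots> = (if E = E' then 2 ^ card M else 0)" by (rule char_orth[OF assms])
  finally show ?thesis by (metis (mono_tags) of_real_0 of_real_eq_iff of_real_numeral of_real_power)
qed

lemma mvec_summ: "mvec d (\<lambda>a b. \<Sum>E\<in>K. M E a b) v = (\<lambda>i. \<Sum>E\<in>K. mvec d (M E) v i)"
  by (auto simp: mvec_def sum_distrib_right intro!: ext sum.swap)

locale lay = stab m gs for m gs +
  fixes N :: nat and SL :: "cmat list"
  assumes mN: "Suc m \<le> N" and SLd: "distinct SL" and SLs: "set SL = gen_prod m gs ` Pow {..<m}"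
begin

definition Aof :: "nat \<Rightarrow> nat set" where
  "Aof k = inv_into (Pow {..<m}) (gen_prod m gs) (SL ! k)"

lemma Aof: assumes "k < length SL" shows "Aof k \<subseteq> {..<m}" "gen_prod m gs (Aof k) = SL ! k"
proof -
  have mem: "SL ! k \<in> gen_prod m gs ` Pow {..<m}" using assms SLs nth_mem by blast
  have "Aof k \<in> Pow {..<m}" unfolding Aof_def by (rule inv_into_into[OF mem])
  then show "Aof k \<subseteq> {..<m}" by simp
  show "gen_prod m gs (Aof k) = SL ! k" unfolding Aof_def by (rule f_inv_into_f[OF mem])
qed

lemma Aof_bij: "bij_betw Aof {..<length SL} (Pow {..<m})"
proof -
  have b1: "bij_betw ((!) SL) {..<length SL} (gen_prod m gs ` Pow {..<m})"
    using SLs SLd by (intro bij_betw_nth) auto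
  have b2: "bij_betw (inv_into (Pow {..<m}) (gen_prod m gs)) (gen_prod m gs ` Pow {..<m}) (Pow {..<m})"
    using ginj by (intro bij_betw_inv_into) (simp add: inj_on_imp_bij_betw)
  have "bij_betw (inv_into (Pow {..<m}) (gen_prod m gs) \<circ> (!) SL) {..<length SL} (Pow {..<m})"
    by (rule bij_betw_trans[OF b1 b2])
  then show ?thesis unfolding Aof_def[abs_def] comp_def .
qed

definition state :: "cvec \<Rightarrow> cvec \<Rightarrow> (nat set \<Rightarrow> cmat) \<Rightarrow> cvec" where
  "state \<psi> y Rm = (\<lambda>i. \<Sum>E\<in>Pow {..<m}. prodv N m (mvec (2 ^ m) (prj m gs E) \<psi>) (R1 (Rm E) y) i)"

lemma restr_state: "restr (2 ^ N) (state \<psi> y Rm) = state \<psi> y Rm"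
  unfolding state_def by (rule restr_sum) simp

lemma state_resm: "state \<psi> y (\<lambda>E. resm 2 (Rm E)) = state \<psi> y Rm"
  by (simp add: state_def R1_resm)

lemma rot_state:
  assumes k: "k < length SL"
  shows "mvec (2 ^ N) (rot N t (embed_RS N (Suc m) (sigma p) (SL ! k))) (state \<psi> y Rm)
       = state \<psi> y (\<lambda>E. mmul 2 (csm (t * cr E (Aof k)) (sigma p)) (Rm E))"
proof -
  define S where "S = SL ! k"
  define A where "A = Aof k"
  have A: "A \<subseteq> {..<m}" "gen_prod m gs A = S" using Aof[OF k] by (simp_all add: A_def S_def)
  have hS: "herm_pauli m S" using Sherm A by auto
  have SS: "mmul (2 ^ m) S S = idm (2 ^ m)" by (rule herm_pauli_sq[OF hS])
  have PP: "mmul (2 ^ N) (embed_RS N (Suc m) (sigma p) S) (embed_RS N (Suc m) (sigma p) S) = idm (2 ^ N)"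
    by (rule embed_sq[OF mN SS sigma_sq])
  have fA: "finite A" using A(1) finite_subset by blast
  have Pst: "mvec (2 ^ N) (embed_RS N (Suc m) (sigma p) S) (state \<psi> y Rm)
      = (\<lambda>i. \<Sum>E\<in>Pow {..<m}. of_real (cr E A) * prodv N m (mvec (2 ^ m) (prj m gs E) \<psi>) (R1 (mmul 2 (sigma p) (Rm E)) y) i)"
    unfolding state_def mvec_sumv embed_prodv[OF mN]
    by (simp add: S_prj[OF A(1)] A(2)[symmetric] prodv_scale1 R1_R1 chi_cr[OF fA])
  show ?thesis
    unfolding S_def[symmetric] A_def[symmetric] mvec_rot[OF PP] restr_state Pst
    unfolding state_def mmul_csm R1_lin R1_resm prodv_lin2 cos_cr sin_cr
    by (auto simp: sum_distrib_left sum.distrib algebra_simps intro!: ext)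
qed

lemma rot_list:
  assumes "set L \<subseteq> {..<length SL}"
  shows "mvec (2 ^ N) (mprodl (2 ^ N) (map (\<lambda>k. rot N (th k) (embed_RS N (Suc m) (sigma p) (SL ! k))) L)) (state \<psi> y Rm)
       = state \<psi> y (\<lambda>E. mmul 2 (csm (\<Sum>k\<leftarrow>L. th k * cr E (Aof k)) (sigma p)) (Rm E))"
  using assms
proof (induction L)
  case Nil
  show ?case by (simp add: mvec_idm restr_state csm_zero mmul_idm_left state_resm)
next
  case (Cons x L)
  have x: "x < length SL" using Cons.prems by auto
  have "mvec (2 ^ N) (mprodl (2 ^ N) (map (\<lambda>k. rot N (th k) (embed_RS N (Suc m) (sigma p) (SL ! k))) (x # L))) (state \<psi> y Rm)
      = state \<psi> y (\<lambda>E. mmul 2 (csm (th x * cr E (Aof x)) (sigma p)) (mmul 2 (csm (\<Sum>k\<leftarrow>L. th k * cr E (Aof k)) (sigma p)) (Rm E)))"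
    using Cons by (simp add: mvec_mmul rot_state[OF x])
  also have "\<dots> = state \<psi> y (\<lambda>E. mmul 2 (csm (\<Sum>k\<leftarrow>x # L. th k * cr E (Aof k)) (sigma p)) (Rm E))"
    by (simp add: mmul_assoc[symmetric] csm_add[OF sigma_sq wfm_sigma])
  finally show ?case .
qed

lemma init_state: "prodv N m \<psi> y = state \<psi> y (\<lambda>E. idm 2)"
proof -
  have "state \<psi> y (\<lambda>E. idm 2) = prodv N m (\<lambda>l. \<Sum>E\<in>Pow {..<m}. mvec (2 ^ m) (prj m gs E) \<psi> l) y"
    by (simp add: state_def R1_idm prodv_sum1)
  also have "(\<lambda>l. \<Sum>E\<in>Pow {..<m}. mvec (2 ^ m) (prj m gs E) \<psi> l) = mvec (2 ^ m) (\<lambda>a b. \<Sum>E\<in>Pow {..<m}. prj m gs E a b) \<psi>"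
    by (simp add: mvec_summ)
  also have "\<dots> = restr (2 ^ m) \<psi>" by (simp add: prj_sum mvec_idm)
  finally show ?thesis by (simp add: prodv_restr)
qed

lemma theta_solve:
  assumes E': "E' \<subseteq> {..<m}"
  shows "(\<Sum>k\<leftarrow>[0..<length SL]. ((1 / 2 ^ m) * (\<Sum>E\<in>Pow {..<m}. cr E (Aof k) * g E)) * cr E' (Aof k)) = g E'"
proof -
  have "(\<Sum>k\<leftarrow>[0..<length SL]. ((1 / 2 ^ m) * (\<Sum>E\<in>Pow {..<m}. cr E (Aof k) * g E)) * cr E' (Aof k))
      = (\<Sum>k\<in>{..<length SL}. ((1 / 2 ^ m) * (\<Sum>E\<in>Pow {..<m}. cr E (Aof k) * g E)) * cr E' (Aof k))"
    by (simp add: sum_list_distinct_conv_sum_set atLeast0LessThan)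
  also have "\<dots> = (\<Sum>A\<in>Pow {..<m}. ((1 / 2 ^ m) * (\<Sum>E\<in>Pow {..<m}. cr E A * g E)) * cr E' A)"
    by (rule sum.reindex_bij_betw[OF Aof_bij])
  also have "\<dots> = (1 / 2 ^ m) * (\<Sum>A\<in>Pow {..<m}. \<Sum>E\<in>Pow {..<m}. g E * (cr E A * cr E' A))"
    by (simp add: sum_distrib_left sum_distrib_right mult_ac)
  also have "\<dots> = (1 / 2 ^ m) * (\<Sum>E\<in>Pow {..<m}. \<Sum>A\<in>Pow {..<m}. g E * (cr E A * cr E' A))"
    by (subst sum.swap) (rule refl)
  also have "\<dots> = (1 / 2 ^ m) * (\<Sum>E\<in>Pow {..<m}. g E * (\<Sum>A\<in>Pow {..<m}. cr E A * cr E' A))"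
    by (simp add: sum_distrib_left)
  also have "\<dots> = (1 / 2 ^ m) * (\<Sum>E\<in>Pow {..<m}. if E = E' then g E * 2 ^ m else 0)"
    using E' by (intro arg_cong[where f = "(*) _"] sum.cong refl) (auto simp: char_orth_r)
  also have "\<dots> = g E'" using E' by simp
  finally show ?thesis .
qed

end


context lay
begin

lemma layer_state:
  assumes SL: "Sl (Suc m) = SL"
  shows "mvec (2 ^ N) (layer N Sl r \<theta> (Suc m)) (prodv N m \<psi> y)
       = state \<psi> y (\<lambda>E. mmul 2 (csm (\<Sum>k\<leftarrow>[0..<length SL]. \<theta> (Suc m) k 1 * cr E (Aof k)) (sigma (r (Suc m) 1)))
                         (mmul 2 (csm (\<Sum>k\<leftarrow>[0..<length SL]. \<theta> (Suc m) k 0 * cr E (Aof k)) (sigma (r (Suc m) 0))) (idm 2)))"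
proof -
  have sub: "set [0..<length SL] \<subseteq> {..<length SL}" by auto
  show ?thesis
    unfolding layer_def SL mvec_mmul init_state
    by (simp only: rot_list[OF sub])
qed

end

lemma ap_mmul: "a < 2 \<Longrightarrow> ap (mmul 2 A B) v a = ap A (ap B v) a"
  by (simp add: ap_def mmul_def sum2 algebra_simps)

lemma ap_idm: "a < 2 \<Longrightarrow> ap (idm 2) v a = v a"
  by (auto simp: ap_def idm_def sum2 less2)

definition tailv :: "nat \<Rightarrow> (nat \<Rightarrow> cvec) \<Rightarrow> nat \<Rightarrow> cvec" where
  "tailv N s k = (\<lambda>j. \<Prod>q\<in>{k + 1..N}. s q (qbit (q - k) j))"

lemma tail_split:
  assumes "Suc m \<le> N"
  shows "tailv N s m h = s (Suc m) (h mod 2) * tailv N s (Suc m) (h div 2)"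
proof -
  have I: "{m + 1..N} = insert (Suc m) {Suc m + 1..N}" using assms by auto
  have q: "qbit (q - m) h = qbit (q - Suc m) (h div 2)" if "q \<in> {Suc m + 1..N}" for q
  proof -
    have e: "q - m - 1 = q - Suc m" "q - Suc m - 1 + 1 = q - Suc m" using that by auto
    have "h div 2 div 2 ^ (q - Suc m - 1) = h div 2 ^ (q - Suc m)"
      by (metis e(2) div_mult2_eq power_Suc Suc_eq_plus1 mult.commute)
    then show ?thesis by (simp add: qbit_def e(1))
  qed
  have "tailv N s m h = s (Suc m) (qbit 1 h) * (\<Prod>q\<in>{Suc m + 1..N}. s q (qbit (q - m) h))"
    unfolding tailv_def I by simp
  also have "\<dots> = s (Suc m) (h mod 2) * tailv N s (Suc m) (h div 2)"
  proof -
    have "(\<Prod>q\<in>{Suc m + 1..N}. s q (qbit (q - m) h)) = tailv N s (Suc m) (h div 2)"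
      unfolding tailv_def by (rule prod.cong) (simp_all add: q)
    moreover have "qbit 1 h = h mod 2" by (simp add: qbit_def)
    ultimately show ?thesis by simp
  qed
  finally show ?thesis .
qed

lemma R1_tail:
  assumes "Suc m \<le> N"
  shows "R1 M (tailv N s m) h = ap M (s (Suc m)) (h mod 2) * tailv N s (Suc m) (h div 2)"
proof -
  have "R1 M (tailv N s m) h = (\<Sum>b<2. M (h mod 2) b * (s (Suc m) b * tailv N s (Suc m) (h div 2)))"
    unfolding R1_def using tail_split[OF assms]
    by (intro sum.cong refl) simp
  then show ?thesis by (simp add: ap_def sum_distrib_left mult_ac)
qed


lemma ansatz_lay:
  assumes ans: "stabilizer_ansatz N Sl s r" and n: "Suc m \<le> N"
  shows "\<exists>gs. lay m gs N (Sl (Suc m))"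
proof -
  have mem: "Suc m \<in> {1..N}" using n by auto
  have "distinct (Sl (Suc m)) \<and> stabilizer_group (Suc m - 1) (set (Sl (Suc m)))"
    using bspec[OF ans[unfolded stabilizer_ansatz_def] mem] by blast
  then have "distinct (Sl (Suc m))" "stabilizer_group m (set (Sl (Suc m)))" by simp_all
  then obtain gs where gs: "length gs = m" "\<forall>g\<in>set gs. herm_pauli m g"
      "\<forall>g\<in>set gs. \<forall>h\<in>set gs. mmul (2 ^ m) g h = mmul (2 ^ m) h g"
      "inj_on (gen_prod m gs) (Pow {..<m})" "set (Sl (Suc m)) = gen_prod m gs ` Pow {..<m}"
      "\<forall>M\<in>set (Sl (Suc m)). herm_pauli m M" "(\<lambda>i j. - idm (2 ^ m) i j) \<notin> set (Sl (Suc m))"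
      and d: "distinct (Sl (Suc m))"
    unfolding stabilizer_group_def by auto
  have "lay m gs N (Sl (Suc m))"
  proof (intro lay.intro stab.intro lay_axioms.intro)
    show "\<forall>A\<in>Pow {..<m}. herm_pauli m (gen_prod m gs A)" using gs(5,6) by auto
    show "(\<lambda>i j. - idm (2 ^ m) i j) \<notin> gen_prod m gs ` Pow {..<m}" using gs(5,7) by simp
  qed (use gs d n in auto)
  then show ?thesis by blast
qed

lemma ansatz_qubit:
  assumes ans: "stabilizer_ansatz N Sl s r" and n: "Suc m \<le> N"
  shows "r (Suc m) 0 \<noteq> PI" "r (Suc m) 1 \<noteq> PI" "r (Suc m) 0 \<noteq> r (Suc m) 1"
    "ip (s (Suc m)) (s (Suc m)) = 1"
    "ip (s (Suc m)) (ap (sigma (r (Suc m) 0)) (s (Suc m))) = 0"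
    "ip (s (Suc m)) (ap (sigma (r (Suc m) 1)) (s (Suc m))) = 0"
proof -
  have mem: "Suc m \<in> {1..N}" using n by auto
  have h: "(cmod (s (Suc m) 0))\<^sup>2 + (cmod (s (Suc m) 1))\<^sup>2 = 1"
      "\<forall>j\<in>{0,1::nat}. (\<Sum>a<2. \<Sum>b<2. cnj (s (Suc m) a) * sigma (r (Suc m) j) a b * s (Suc m) b) = 0"
      "(\<Sum>a<2. \<Sum>b<2. sigma (r (Suc m) 0) a b * sigma (r (Suc m) 1) b a) = 0"
    using bspec[OF ans[unfolded stabilizer_ansatz_def] mem] by auto
  let ?s = "s (Suc m)"
  show ss: "ip ?s ?s = 1"
  proof -
    have e: "ip ?s ?s = complex_of_real ((cmod (?s 0))\<^sup>2 + (cmod (?s 1))\<^sup>2)"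
      by (simp only: ip_def sum2 of_real_add cmod_sq_cnj mult.commute)
    show ?thesis unfolding e h(1) by simp
  qed
  have e: "ip ?s (ap (sigma p) ?s) = (\<Sum>a<2. \<Sum>b<2. cnj (?s a) * sigma p a b * ?s b)" for p
    by (simp add: ip_def ap_def sum_distrib_left mult_ac)
  show s0: "ip ?s (ap (sigma (r (Suc m) 0)) ?s) = 0" using h(2) e by simp
  show s1: "ip ?s (ap (sigma (r (Suc m) 1)) ?s) = 0" using h(2) e by simp
  have I: "ip ?s (ap (sigma PI) ?s) = 1"
  proof -
    have "ip ?s (ap (sigma PI) ?s) = ip ?s ?s"
      by (rule ip_cong) (auto simp: ap_def sigma_def sum2 less2)
    then show ?thesis using ss by simp
  qed
  show "r (Suc m) 0 \<noteq> PI" using s0 I by auto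
  show "r (Suc m) 1 \<noteq> PI" using s1 I by auto
  show "r (Suc m) 0 \<noteq> r (Suc m) 1"
  proof
    assume eq: "r (Suc m) 0 = r (Suc m) 1"
    have "(\<Sum>a<2. \<Sum>b<2. sigma (r (Suc m) 0) a b * sigma (r (Suc m) 0) b a) = (\<Sum>a<2::nat. 1)"
      by (intro sum.cong refl) (simp add: sigma_sq_entry)
    then show False using h(3) eq by simp
  qed
qed

lemma upt_rev_Suc: "rev [1..<Suc k + 1] = Suc k # rev [1..<k + 1]"
  by simp

lemma reach:
  assumes ans: "stabilizer_ansatz N Sl s r"
  shows "k \<le> N \<Longrightarrow> (\<Sum>i<2 ^ k. (cmod (\<phi> i))\<^sup>2) = 1 \<Longrightarrow>
    \<exists>\<theta> \<alpha>. mvec (2 ^ N) (mprodl (2 ^ N) (map (layer N Sl r \<theta>) (rev [1..<k + 1]))) (start_state N s)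
         = (\<lambda>i. cis \<alpha> * prodv N k \<phi> (tailv N s k) i)"
proof (induction k arbitrary: \<phi>)
  case 0
  then have "(cmod (\<phi> 0))\<^sup>2 = 1" by simp
  then have c1: "cmod (\<phi> 0) = 1" by (simp add: power2_eq_1_iff) (use norm_ge_zero[of "\<phi> 0"] in linarith)
  define a where "a = Arg (\<phi> 0)"
  have pa: "\<phi> 0 = cis a" using rcis_cmod_Arg[of "\<phi> 0"] c1 by (simp add: a_def rcis_def)
  have st: "start_state N s = prodv N 0 (\<lambda>_. 1) (tailv N s 0)"
    by (auto simp: start_state_def prodv_def tailv_def intro!: ext)
  show ?case
  proof (intro exI)
    show "mvec (2 ^ N) (mprodl (2 ^ N) (map (layer N Sl r (\<lambda>_ _ _. 0)) (rev [1..<0 + 1]))) (start_state N s)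
        = (\<lambda>i. cis (- a) * prodv N 0 \<phi> (tailv N s 0) i)"
    proof -
      have "mvec (2 ^ N) (mprodl (2 ^ N) (map (layer N Sl r (\<lambda>_ _ _. 0)) (rev [1..<0 + 1]))) (start_state N s)
          = prodv N 0 (\<lambda>_. 1) (tailv N s 0)"
        by (simp add: mvec_idm st)
      also have "\<dots> = (\<lambda>i. cis (- a) * prodv N 0 \<phi> (tailv N s 0) i)"
        by (auto simp: prodv_def pa cis_mult intro!: ext)
      finally show ?thesis .
    qed
  qed
next
  case (Suc k)
  have kN: "Suc k \<le> N" and kN': "k \<le> N" using Suc.prems by auto
  obtain gs where LL: "lay k gs N (Sl (Suc k))" using ansatz_lay[OF ans kN] by blast
  interpret L: lay k gs N "Sl (Suc k)" by (rule LL)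
  note q = ansatz_qubit[OF ans kN]
  obtain \<psi> \<beta> \<gamma> where psi: "(\<Sum>l<2 ^ k. (cmod (\<psi> l))\<^sup>2) = 1"
      and co: "\<And>l b. l < 2 ^ k \<Longrightarrow> b < 2 \<Longrightarrow> (\<Sum>E\<in>Pow {..<k}. mvec (2 ^ k) (prj k gs E) \<psi> l
                 * ap (csm (\<beta> E) (sigma (r (Suc k) 1))) (ap (csm (\<gamma> E) (sigma (r (Suc k) 0))) (s (Suc k))) b) = \<phi> (l + b * 2 ^ k)"
    using L.coeff_choice[OF q Suc.prems(2)] by blast
  obtain \<theta>' \<alpha> where IH: "mvec (2 ^ N) (mprodl (2 ^ N) (map (layer N Sl r \<theta>') (rev [1..<k + 1]))) (start_state N s)
         = (\<lambda>i. cis \<alpha> * prodv N k \<psi> (tailv N s k) i)"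
    using Suc.IH[OF kN' psi] by blast
  define th where "th = (\<lambda>k' j. (1 / 2 ^ k) * (\<Sum>E\<in>Pow {..<k}. cr E (L.Aof k') * (if j = (0::nat) then \<gamma> E else \<beta> E)))"
  define \<theta> where "\<theta> = \<theta>'(Suc k := th)"
  have map_eq: "map (layer N Sl r \<theta>) (rev [1..<Suc k + 1]) = layer N Sl r \<theta> (Suc k) # map (layer N Sl r \<theta>') (rev [1..<k + 1])"
  proof -
    have "map (layer N Sl r \<theta>) (rev [1..<k + 1]) = map (layer N Sl r \<theta>') (rev [1..<k + 1])"
      by (intro map_cong refl) (auto simp: layer_def \<theta>_def)
    then show ?thesis by (simp only: upt_rev_Suc list.map)
  qed
  define Rm where "Rm = (\<lambda>E. mmul 2 (csm (\<Sum>k'\<leftarrow>[0..<length (Sl (Suc k))]. \<theta> (Suc k) k' 1 * cr E (L.Aof k')) (sigma (r (Suc k) 1)))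
                         (mmul 2 (csm (\<Sum>k'\<leftarrow>[0..<length (Sl (Suc k))]. \<theta> (Suc k) k' 0 * cr E (L.Aof k')) (sigma (r (Suc k) 0))) (idm 2)))"
  have Rm: "ap (Rm E) (s (Suc k)) b = ap (csm (\<beta> E) (sigma (r (Suc k) 1))) (ap (csm (\<gamma> E) (sigma (r (Suc k) 0))) (s (Suc k))) b"
    if E: "E \<in> Pow {..<k}" and b: "b < 2" for E b
  proof -
    have g0: "(\<Sum>k'\<leftarrow>[0..<length (Sl (Suc k))]. \<theta> (Suc k) k' 0 * cr E (L.Aof k')) = \<gamma> E"
      using L.theta_solve[of E \<gamma>] E by (simp add: \<theta>_def th_def)
    have g1: "(\<Sum>k'\<leftarrow>[0..<length (Sl (Suc k))]. \<theta> (Suc k) k' 1 * cr E (L.Aof k')) = \<beta> E"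
      using L.theta_solve[of E \<beta>] E by (simp add: \<theta>_def th_def)
    have "ap (Rm E) (s (Suc k)) b = ap (csm (\<beta> E) (sigma (r (Suc k) 1))) (ap (mmul 2 (csm (\<gamma> E) (sigma (r (Suc k) 0))) (idm 2)) (s (Suc k))) b"
      unfolding Rm_def g0 g1 using b by (rule ap_mmul)
    also have "ap (csm (\<beta> E) (sigma (r (Suc k) 1))) (ap (mmul 2 (csm (\<gamma> E) (sigma (r (Suc k) 0))) (idm 2)) (s (Suc k)))
        = ap (csm (\<beta> E) (sigma (r (Suc k) 1))) (ap (csm (\<gamma> E) (sigma (r (Suc k) 0))) (ap (idm 2) (s (Suc k))))"
      by (rule ap_cong) (rule ap_mmul)
    also have "ap (csm (\<gamma> E) (sigma (r (Suc k) 0))) (ap (idm 2) (s (Suc k))) = ap (csm (\<gamma> E) (sigma (r (Suc k) 0))) (s (Suc k))"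
      by (rule ap_cong) (rule ap_idm)
    finally show ?thesis .
  qed
  have fin: "L.state \<psi> (tailv N s k) Rm = prodv N (Suc k) \<phi> (tailv N s (Suc k))"
  proof
    fix i
    show "L.state \<psi> (tailv N s k) Rm i = prodv N (Suc k) \<phi> (tailv N s (Suc k)) i"
    proof (cases "i < 2 ^ N")
      case False then show ?thesis by (simp add: L.state_def prodv_def)
    next
      case True
      define l where "l = i mod 2 ^ k"
      define b where "b = i div 2 ^ k mod 2"
      have l: "l < 2 ^ k" and b: "b < 2" by (simp_all add: l_def b_def)
      have m1: "i mod 2 ^ Suc k = l + b * 2 ^ k"
        unfolding l_def b_def power_Suc2 mod_mult2_eq by simp
      have d1: "i div 2 ^ Suc k = i div 2 ^ k div 2" by (rule div_pow_Suc)
      have "L.state \<psi> (tailv N s k) Rm i = (\<Sum>E\<in>Pow {..<k}. mvec (2 ^ k) (prj k gs E) \<psi> l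
            * (ap (Rm E) (s (Suc k)) b * tailv N s (Suc k) (i div 2 ^ k div 2)))"
        using True by (simp add: L.state_def prodv_def R1_tail[OF kN] l_def b_def)
      also have "\<dots> = (\<Sum>E\<in>Pow {..<k}. mvec (2 ^ k) (prj k gs E) \<psi> l
            * ap (csm (\<beta> E) (sigma (r (Suc k) 1))) (ap (csm (\<gamma> E) (sigma (r (Suc k) 0))) (s (Suc k))) b)
            * tailv N s (Suc k) (i div 2 ^ k div 2)"
        by (simp add: sum_distrib_right sum_distrib_left Rm b mult_ac)
      also have "\<dots> = \<phi> (l + b * 2 ^ k) * tailv N s (Suc k) (i div 2 ^ k div 2)"
        by (simp only: co[OF l b])
      also have "\<dots> = prodv N (Suc k) \<phi> (tailv N s (Suc k)) i"
        using True unfolding prodv_def m1 d1 by simp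
      finally show ?thesis .
    qed
  qed
  show ?case
  proof (intro exI)
    have "mvec (2 ^ N) (mprodl (2 ^ N) (map (layer N Sl r \<theta>) (rev [1..<Suc k + 1]))) (start_state N s)
        = mvec (2 ^ N) (layer N Sl r \<theta> (Suc k)) (\<lambda>i. cis \<alpha> * prodv N k \<psi> (tailv N s k) i)"
      unfolding map_eq mvec_mprodl_Cons IH ..
    also have "\<dots> = (\<lambda>i. cis \<alpha> * L.state \<psi> (tailv N s k) Rm i)"
      unfolding mvec_scalev L.layer_state[where Sl=Sl, OF refl] Rm_def ..
    finally show "mvec (2 ^ N) (mprodl (2 ^ N) (map (layer N Sl r \<theta>) (rev [1..<Suc k + 1]))) (start_state N s)
        = (\<lambda>i. cis \<alpha> * prodv N (Suc k) \<phi> (tailv N s (Suc k)) i)"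
      by (simp add: fin)
  qed
qed


lemma diff_comp:
  fixes F :: "real^'k \<Rightarrow> complex"
  assumes "F differentiable_on UNIV"
  shows "(\<lambda>p::((real^'k) \<times> real \<times> real). Re (complex_of_real (snd (snd p)) * cis (- fst (snd p)) * F (fst p))) differentiable (at p)"
    and "(\<lambda>p::((real^'k) \<times> real \<times> real). Im (complex_of_real (snd (snd p)) * cis (- fst (snd p)) * F (fst p))) differentiable (at p)"
proof -
  have d1: "(\<lambda>p::((real^'k) \<times> real \<times> real). F (fst p)) differentiable (at p)"
  proof -
    have Fd: "F differentiable (at (fst p))" using assms by (simp add: differentiable_on_def)
    have fd: "fst differentiable (at p)" by (rule bounded_linear_imp_differentiable[OF bounded_linear_fst])
    show ?thesis by (rule differentiable_compose[OF Fd fd])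
  qed
  have d2: "(\<lambda>p::((real^'k) \<times> real \<times> real). cis (- fst (snd p))) differentiable (at p)"
    by (rule differentiableI, rule has_derivative_cis) (auto intro!: derivative_eq_intros)
  have d3: "(\<lambda>p::((real^'k) \<times> real \<times> real). complex_of_real (snd (snd p))) differentiable (at p)"
    by (rule differentiableI) (auto intro!: derivative_eq_intros)
  have d: "(\<lambda>p::((real^'k) \<times> real \<times> real). complex_of_real (snd (snd p)) * cis (- fst (snd p)) * F (fst p)) differentiable (at p)"
    by (intro differentiable_mult d1 d2 d3)
  have Red: "Re differentiable (at z)" for z by (rule bounded_linear_imp_differentiable[OF bounded_linear_Re])
  have Imd: "Im differentiable (at z)" for z by (rule bounded_linear_imp_differentiable[OF bounded_linear_Im])
  show "(\<lambda>p::((real^'k) \<times> real \<times> real). Re (complex_of_real (snd (snd p)) * cis (- fst (snd p)) * F (fst p))) differentiable (at p)"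
    by (rule differentiable_compose[OF Red d])
  show "(\<lambda>p::((real^'k) \<times> real \<times> real). Im (complex_of_real (snd (snd p)) * cis (- fst (snd p)) * F (fst p))) differentiable (at p)"
    by (rule differentiable_compose[OF Imd d])
qed


lemma sum_pow_minus1: "(\<Sum>n\<in>{1..N}. (2::nat) ^ (n - 1) * 2) = 2 * (2 ^ N - 1)"
proof (induction N)
  case 0 then show ?case by simp
next
  case (Suc N)
  have "{1..Suc N} = insert (Suc N) {1..N}" by auto
  then have "(\<Sum>n\<in>{1..Suc N}. (2::nat) ^ (n - 1) * 2) = 2 ^ N * 2 + (\<Sum>n\<in>{1..N}. 2 ^ (n - 1) * 2)"
    by simp
  also have "\<dots> = 2 ^ N * 2 + 2 * (2 ^ N - 1)" using Suc.IH by simp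
  also have "\<dots> = 2 * (2 ^ Suc N - 1)"
  proof -
    have "(1::nat) \<le> 2 ^ N" by simp
    moreover have "(2::nat) ^ Suc N = 2 * 2 ^ N" by simp
    ultimately show ?thesis by arith
  qed
  finally show ?case .
qed

lemma part1:
  assumes ans: "stabilizer_ansatz N Sl s r"
  shows "card (param_index N Sl) = 2 * (2 ^ N - 1)"
proof -
  have len: "length (Sl n) = 2 ^ (n - 1)" if n: "n \<in> {1..N}" for n
  proof -
    obtain m where m: "n = Suc m" using n by (cases n) auto
    have mN: "Suc m \<le> N" using n m by auto
    obtain gs where "lay m gs N (Sl (Suc m))" using ansatz_lay[OF ans mN] by blast
    then interpret L: lay m gs N "Sl (Suc m)" .
    have "length (Sl (Suc m)) = card (set (Sl (Suc m)))" using L.SLd by (simp add: distinct_card)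
    also have "\<dots> = card (Pow {..<m})" using L.SLs L.ginj by (simp add: card_image)
    also have "\<dots> = 2 ^ m" by (simp add: card_Pow)
    finally show ?thesis using m by simp
  qed
  have eq: "param_index N Sl = Sigma {1..N} (\<lambda>n. {..<length (Sl n)} \<times> {0, 1})"
    by (auto simp: param_index_def)
  have "card (param_index N Sl) = (\<Sum>n\<in>{1..N}. card ({..<length (Sl n)} \<times> {0::nat, 1}))"
    unfolding eq by (rule card_SigmaI) auto
  also have "\<dots> = (\<Sum>n\<in>{1..N}. 2 ^ (n - 1) * 2)"
    by (intro sum.cong refl) (simp add: card_cartesian_product len)
  also have "\<dots> = 2 * (2 ^ N - 1)" by (rule sum_pow_minus1)
  finally show ?thesis .
qed

lemma part2:
  fixes f :: "real ^ 'k \<Rightarrow> cvec"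
  assumes card: "CARD('k) < 2 * (2 ^ N - 1)"
    and diff: "\<forall>i < 2 ^ N. (\<lambda>x. f x i) differentiable_on UNIV"
    and reach: "\<forall>\<phi>. unit_vec (2 ^ N) \<phi> \<longrightarrow> (\<exists>x \<alpha>. \<forall>i < 2 ^ N. f x i = cis \<alpha> * \<phi> i)"
  shows False
proof -
  have cardm: "CARD('k option option option) = CARD('k) + 3" by simp
  have p1: "(1::nat) \<le> 2 ^ N" by simp
  have le: "CARD('k option option option) \<le> 2 ^ Suc N" using card p1 cardm by simp
  obtain idx where bij: "bij_betw idx (UNIV :: 'k option option option set) {0..<CARD('k option option option)}"
    using ex_bij_betw_finite_nat[of "UNIV :: 'k option option option set"] by auto
  have inj: "inj idx" using bij by (simp add: bij_betw_def)
  have idxlt: "idx i < 2 ^ Suc N" for i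
  proof -
    have "idx i \<in> {0..<CARD('k option option option)}" using bij by (auto simp: bij_betw_def)
    then show ?thesis using le by simp
  qed
  have idx2: "idx i div 2 < 2 ^ N" for i using idxlt[of i] by simp
  define cc where "cc = (\<lambda>(v::cvec) j. if even j then Re (v (j div 2)) else Im (v (j div 2)))"
  define h where "h = (\<lambda>j (p::(real^'k) \<times> real \<times> real). complex_of_real (snd (snd p)) * cis (- fst (snd p)) * f (fst p) j)"
  define g :: "(real^'k) \<times> real \<times> real \<Rightarrow> real ^ ('k option option option)"
    where "g = (\<lambda>p. \<Sum>i\<in>UNIV. cc (\<lambda>j. h j p) (idx i) *\<^sub>R axis i 1)"
  have gcomp: "g p $ i = cc (\<lambda>j. h j p) (idx i)" for p i
  proof -
    have "g p $ i = (\<Sum>i'\<in>UNIV. cc (\<lambda>j. h j p) (idx i') * (if i = i' then 1 else 0))"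
      by (simp add: g_def sum_component axis_def)
    also have "\<dots> = cc (\<lambda>j. h j p) (idx i)" by (simp add: if_distrib cong: if_cong)
    finally show ?thesis .
  qed
  have gdiff: "g differentiable_on UNIV"
    unfolding differentiable_on_def
  proof
    fix p :: "(real^'k) \<times> real \<times> real"
    have "(\<lambda>p. cc (\<lambda>j. h j p) (idx i)) differentiable (at p)" for i
    proof (cases "even (idx i)")
      case True
      have fd: "(\<lambda>x. f x (idx i div 2)) differentiable_on UNIV" using diff idx2 by blast
      have e: "(\<lambda>p. cc (\<lambda>j. h j p) (idx i)) = (\<lambda>p. Re (h (idx i div 2) p))" using True by (simp add: cc_def)
      show ?thesis unfolding e unfolding h_def by (rule diff_comp(1)[OF fd])
    next
      case False
      have fd: "(\<lambda>x. f x (idx i div 2)) differentiable_on UNIV" using diff idx2 by blast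
      have e: "(\<lambda>p. cc (\<lambda>j. h j p) (idx i)) = (\<lambda>p. Im (h (idx i div 2) p))" using False by (simp add: cc_def)
      show ?thesis unfolding e unfolding h_def by (rule diff_comp(2)[OF fd])
    qed
    then show "g differentiable at p within UNIV"
      unfolding g_def by (intro differentiable_sum) (auto intro!: differentiable_scaleR)
  qed
  have DIM: "DIM((real^'k) \<times> real \<times> real) < DIM(real ^ ('k option option option))"
    by simp
  have negl: "negligible (g ` UNIV)"
    by (rule negligible_differentiable_image_lowdim[OF DIM gdiff])
  have cover: "y \<in> g ` UNIV" if y0: "y \<noteq> 0" for y
  proof -
    define coord where "coord = (\<lambda>c. if c \<in> range idx then y $ (inv idx c) else 0)"
    define v where "v = (\<lambda>j. Complex (coord (2 * j)) (coord (2 * j + 1)))"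
    have ccv: "cc v c = coord c" for c
    proof (cases "even c")
      case True then show ?thesis by (simp add: cc_def v_def)
    next
      case False
      then have "2 * (c div 2) + 1 = c" by presburger
      then show ?thesis using False by (simp add: cc_def v_def)
    qed
    have coord_idx: "coord (idx i) = y $ i" for i by (simp add: coord_def inj)
    obtain i0 where i0: "y $ i0 \<noteq> 0" using y0 by (auto simp: vec_eq_iff)
    define j0 where "j0 = idx i0 div 2"
    have j0: "j0 < 2 ^ N" by (simp add: j0_def idx2)
    have vj0: "v j0 \<noteq> 0"
    proof
      assume "v j0 = 0"
      then have "cc v (idx i0) = 0" by (simp add: cc_def j0_def)
      then show False using ccv coord_idx i0 by simp
    qed
    define S where "S = (\<Sum>j<2 ^ N. (cmod (v j))\<^sup>2)"
    have Spos: "S > 0"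
    proof -
      have "(cmod (v j0))\<^sup>2 \<le> S" unfolding S_def using j0 by (intro member_le_sum) auto
      moreover have "(cmod (v j0))\<^sup>2 > 0" using vj0 by simp
      ultimately show ?thesis by linarith
    qed
    define n where "n = sqrt S"
    have n0: "n > 0" using Spos by (simp add: n_def)
    define \<phi> where "\<phi> = (\<lambda>j. v j / complex_of_real n)"
    have "unit_vec (2 ^ N) \<phi>"
    proof -
      have "(\<Sum>i<2 ^ N. (cmod (\<phi> i))\<^sup>2) = (\<Sum>i<2 ^ N. (cmod (v i))\<^sup>2 / n\<^sup>2)"
        using n0 by (simp add: \<phi>_def norm_divide power_divide)
      also have "\<dots> = S / n\<^sup>2" by (simp add: S_def sum_divide_distrib)
      also have "\<dots> = 1" using Spos by (simp add: n_def)
      finally show ?thesis by (simp add: unit_vec_def)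
    qed
    then obtain x \<alpha> where xa: "\<forall>i < 2 ^ N. f x i = cis \<alpha> * \<phi> i" using reach by blast
    have hv: "h j (x, \<alpha>, n) = v j" if "j < 2 ^ N" for j
    proof -
      have "h j (x, \<alpha>, n) = complex_of_real n * (cis (- \<alpha>) * cis \<alpha>) * (v j / complex_of_real n)"
        using xa that by (simp add: h_def \<phi>_def mult_ac)
      also have "\<dots> = v j" using n0 by (simp add: cis_mult)
      finally show ?thesis .
    qed
    have "g (x, \<alpha>, n) = y"
      unfolding vec_eq_iff
    proof (intro allI)
      fix i
      have "g (x, \<alpha>, n) $ i = cc (\<lambda>j. h j (x, \<alpha>, n)) (idx i)" by (rule gcomp)
      also have "\<dots> = cc v (idx i)" using hv[OF idx2[of i]] by (simp add: cc_def)
      also have "\<dots> = y $ i" by (simp add: ccv coord_idx)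
      finally show "g (x, \<alpha>, n) $ i = y $ i" .
    qed
    then show ?thesis by (metis rangeI)
  qed
  have "UNIV \<subseteq> insert 0 (g ` UNIV)" using cover by blast
  then have "negligible (UNIV :: (real ^ ('k option option option)) set)"
    using negl by (metis negligible_insert negligible_subset)
  then show False using non_negligible_UNIV by blast
qed


theorem theorem1:
  fixes N :: nat
    and Sl :: "nat \<Rightarrow> cmat list"
    and s :: "nat \<Rightarrow> cvec"
    and r :: "nat \<Rightarrow> nat \<Rightarrow> pauli"
  assumes "N \<ge> 1"
    and "stabilizer_ansatz N Sl s r"
  shows "card (param_index N Sl) = 2 * (2 ^ N - 1)
       \<and> (\<forall>f :: real ^ 'k \<Rightarrow> cvec.
            CARD('k) < 2 * (2 ^ N - 1)
            \<and> (\<forall>i < 2 ^ N. (\<lambda>x. f x i) differentiable_on UNIV)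
            \<longrightarrow> \<not> (\<forall>\<phi>. unit_vec (2 ^ N) \<phi> \<longrightarrow>
                     (\<exists>x \<alpha>. \<forall>i < 2 ^ N. f x i = cis \<alpha> * \<phi> i)))
       \<and> (\<forall>\<phi>. unit_vec (2 ^ N) \<phi> \<longrightarrow>
            (\<exists>\<theta> \<alpha>. \<forall>i < 2 ^ N.
               mvec (2 ^ N) (ansatz_U N Sl r \<theta>) (start_state N s) i = cis \<alpha> * \<phi> i))"
proof -
  have p1: "card (param_index N Sl) = 2 * (2 ^ N - 1)" by (rule part1[OF assms(2)])
  have p2: "\<forall>f :: real ^ 'k \<Rightarrow> cvec.
            CARD('k) < 2 * (2 ^ N - 1)
            \<and> (\<forall>i < 2 ^ N. (\<lambda>x. f x i) differentiable_on UNIV)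
            \<longrightarrow> \<not> (\<forall>\<phi>. unit_vec (2 ^ N) \<phi> \<longrightarrow>
                     (\<exists>x \<alpha>. \<forall>i < 2 ^ N. f x i = cis \<alpha> * \<phi> i))"
  proof (intro allI impI notI)
    fix f :: "real ^ 'k \<Rightarrow> cvec"
    assume a: "CARD('k) < 2 * (2 ^ N - 1) \<and> (\<forall>i < 2 ^ N. (\<lambda>x. f x i) differentiable_on UNIV)"
      and b: "\<forall>\<phi>. unit_vec (2 ^ N) \<phi> \<longrightarrow> (\<exists>x \<alpha>. \<forall>i < 2 ^ N. f x i = cis \<alpha> * \<phi> i)"
    show False using part2[of N f] a b by blast
  qed
  have p3: "\<forall>\<phi>. unit_vec (2 ^ N) \<phi> \<longrightarrow>
            (\<exists>\<theta> \<alpha>. \<forall>i < 2 ^ N.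
               mvec (2 ^ N) (ansatz_U N Sl r \<theta>) (start_state N s) i = cis \<alpha> * \<phi> i)"
  proof (intro allI impI)
    fix \<phi> assume u: "unit_vec (2 ^ N) \<phi>"
    then have u': "(\<Sum>i<2 ^ N. (cmod (\<phi> i))\<^sup>2) = 1" by (simp add: unit_vec_def)
    obtain \<theta> \<alpha> where th: "mvec (2 ^ N) (mprodl (2 ^ N) (map (layer N Sl r \<theta>) (rev [1..<N + 1]))) (start_state N s)
         = (\<lambda>i. cis \<alpha> * prodv N N \<phi> (tailv N s N) i)"
      using reach[OF assms(2) le_refl u'] by blast
    have "\<forall>i < 2 ^ N. mvec (2 ^ N) (ansatz_U N Sl r \<theta>) (start_state N s) i = cis \<alpha> * \<phi> i"
    proof (intro allI impI)
      fix i :: nat assume i: "i < 2 ^ N"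
      have "mvec (2 ^ N) (ansatz_U N Sl r \<theta>) (start_state N s) i = cis \<alpha> * prodv N N \<phi> (tailv N s N) i"
        unfolding ansatz_U_def th ..
      also have "\<dots> = cis \<alpha> * \<phi> i" using i by (simp add: prodv_def tailv_def)
      finally show "mvec (2 ^ N) (ansatz_U N Sl r \<theta>) (start_state N s) i = cis \<alpha> * \<phi> i" .
    qed
    then show "\<exists>\<theta> \<alpha>. \<forall>i < 2 ^ N. mvec (2 ^ N) (ansatz_U N Sl r \<theta>) (start_state N s) i = cis \<alpha> * \<phi> i"
      by blast
  qed
  show ?thesis using p1 p2 p3 by blast
qed


end
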